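(* Let $\Omega=(\mathscr{M},\langle\cdot,\cdot\rangle_{\mathscr{M}},\mathsf{D},\mathfrak{A},\mathsf{L})$ be a metrized quantum vector bundle of type $(F,G,H)$ for some admissible triple $(F,G,H)$. For every $r\ge0$, the $\mathfrak{A}$-weak topology and the norm topology of $\|\cdot\|_{\mathscr{M}}$ coincide on $\mathscr{D}_r(\Omega)$.
   Context: Notation: for a unital C*-algebra $\mathfrak{A}$, $\mathfrak{sa}(\mathfrak{A})$ denotes the set of self-adjoint elements and $\mathscr{S}(\mathfrak{A})$ the state space; $\Re a=(a+a^* )/2$, $\Im a=(a-a^* )/(2i)$; the Jordan product is $a\circ b=(ab+ba)/2$ and the Lie product is $\{a,b\}=(ab-ba)/(2i)$. Convention: a seminorm $\mathsf{L}$ defined on a subspace $\mathrm{dom}(\mathsf{L})$ is extended by $\mathsf{L}(x)=\infty$ outside $\mathrm{dom}(\mathsf{L})$, with $0\cdot\infty=0$ and $\infty+r=\infty$. A function $F:[0,\infty)^4\to[0,\infty)$ is admissible if it is nondecreasing for the product order and $x_1x_3+x_2x_4\le F(x_1,x_2,x_3,x_4)$. An $F$-quasi-Leibniz quantum compact metric space $(\mathfrak{A},\mathsf{L})$ is a unital C*-algebra $\mathfrak{A}$ with a seminorm $\mathsf{L}$ on a dense subspace $\mathrm{dom}(\mathsf{L})\subseteq\mathfrak{sa}(\mathfrak{A})$ closed under $\circ$ and $\{\cdot,\cdot\}$, such that: (i) $\{a\in\mathrm{dom}(\mathsf{L}):\mathsf{L}(a)=0\}=\mathbb{R}1_{\mathfrak{A}}$;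 (ii) $\mathrm{mk}_{\mathsf{L}}(\varphi,\psi)=\sup\{|\varphi(a)-\psi(a)|:a\in\mathfrak{sa}(\mathfrak{A}),\mathsf{L}(a)\le1\}$ metrizes the weak* topology on $\mathscr{S}(\mathfrak{A})$; (iii) $\{a:\mathsf{L}(a)\le1\}$ is norm closed; (iv) $\max\{\mathsf{L}(a\circ b),\mathsf{L}(\{a,b\})\}\le F(\|a\|,\|b\|,\mathsf{L}(a),\mathsf{L}(b))$ for $a,b\in\mathrm{dom}(\mathsf{L})$. A triple $(F,G,H)$ is admissible if $F$ is admissible, $G:[0,\infty)^3\to[0,\infty)$ is nondecreasing in each variable with $(x+y)z\le G(x,y,z)$, and $H:[0,\infty)^2\to[0,\infty)$ is nondecreasing in each variable with $2xy\le H(x,y)$. A left Hilbert $\mathfrak{A}$-module $(\mathscr{M},\langle\cdot,\cdot\rangle_{\mathscr{M}})$ is a left $\mathfrak{A}$-module with a map $\langle\cdot,\cdot\rangle_{\mathscr{M}}:\mathscr{M}\times\mathscr{M}\to\mathfrak{A}$, linear in the first and conjugate-linear in the second variable, with $\langle a\omega,\eta\rangle=a\langle\omega,\eta\rangle$, $\langle\omega,\eta\rangle^*=\langle\eta,\omega\rangle$, $\langle\omega,\omega\rangle\ge0$ with equality only for $\omega=0$, and complete for $\|\omega\|_{\mathscr{M}}=\|\langle\omega,\omega\rangle_{\mathscr{M}}\|_{\mathfrak{A}}^{1/2}$. A metrized quantum vector bundle of type $(F,G,H)$ is a tuple $\Omega=(\mathscr{M},\langle\cdot,\cdot\rangle_{\mathscr{M}},\mathsf{D},\mathfrak{A},\mathsf{L})$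 where $(\mathfrak{A},\mathsf{L})$ is an $F$-quasi-Leibniz quantum compact metric space (the base space), $(\mathscr{M},\langle\cdot,\cdot\rangle_{\mathscr{M}})$ is a left Hilbert $\mathfrak{A}$-module, and $\mathsf{D}$ (the D-norm) is a norm on a dense complex subspace $\mathrm{dom}(\mathsf{D})$ of $\mathscr{M}$ (extended by $\infty$) such that: (1) $\|\omega\|_{\mathscr{M}}\le\mathsf{D}(\omega)$; (2) $\{\omega:\mathsf{D}(\omega)\le1\}$ is compact for $\|\cdot\|_{\mathscr{M}}$; (3) $\mathsf{D}(a\omega)\le G(\|a\|_{\mathfrak{A}},\mathsf{L}(a),\mathsf{D}(\omega))$ for $a\in\mathfrak{sa}(\mathfrak{A})$, $\omega\in\mathscr{M}$; (4) $\max\{\mathsf{L}(\Re\langle\omega,\eta\rangle_{\mathscr{M}}),\mathsf{L}(\Im\langle\omega,\eta\rangle_{\mathscr{M}})\}\le H(\mathsf{D}(\omega),\mathsf{D}(\eta))$ for all $\omega,\eta\in\mathscr{M}$. For $r\ge0$, $\mathscr{D}_r(\Omega)=\{\omega\in\mathscr{M}:\mathsf{D}(\omega)\le r\}$. The $\mathfrak{A}$-weak topology on $\mathscr{M}$ is the weakest topology making all maps $\omega\mapsto\langle\omega,\eta\rangle_{\mathscr{M}}$ ($\eta\in\mathscr{M}$) continuous into $(\mathfrak{A},\|\cdot\|_{\mathfrak{A}})$. *)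

theory Defs
  imports "HOL-Analysis.Analysis"
begin

class cstar_unital = real_normed_algebra_1 + banach +
  fixes cs_scale :: "complex \<Rightarrow> 'a \<Rightarrow> 'a"
    and cs_star :: "'a \<Rightarrow> 'a"
  assumes cs_scale_add_right: "cs_scale c (x + y) = cs_scale c x + cs_scale c y"
    and cs_scale_add_left: "cs_scale (c + d) x = cs_scale c x + cs_scale d x"
    and cs_scale_scale: "cs_scale c (cs_scale d x) = cs_scale (c * d) x"
    and cs_scale_of_real: "cs_scale (complex_of_real r) x = r *\<^sub>R x"
    and cs_scale_mult_left: "cs_scale c x * y = cs_scale c (x * y)"
    and cs_scale_mult_right: "x * cs_scale c y = cs_scale c (x * y)"
    and norm_cs_scale: "norm (cs_scale c x) = cmod c * norm x"
    and cs_star_star: "cs_star (cs_star x) = x"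
    and cs_star_add: "cs_star (x + y) = cs_star x + cs_star y"
    and cs_star_scale: "cs_star (cs_scale c x) = cs_scale (cnj c) (cs_star x)"
    and cs_star_mult: "cs_star (x * y) = cs_star y * cs_star x"
    and cstar_identity: "norm (cs_star x * x) = (norm x)\<^sup>2"

definition sa :: "'a::cstar_unital \<Rightarrow> bool" where
  "sa a \<longleftrightarrow> cs_star a = a"

definition ReA :: "'a::cstar_unital \<Rightarrow> 'a" where
  "ReA a = (1/2) *\<^sub>R (a + cs_star a)"

definition ImA :: "'a::cstar_unital \<Rightarrow> 'a" where
  "ImA a = cs_scale (1 / (2 * \<i>)) (a - cs_star a)"

definition jordan :: "'a::cstar_unital \<Rightarrow> 'a \<Rightarrow> 'a" where
  "jordan a b = (1/2) *\<^sub>R (a * b + b * a)"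

definition lie :: "'a::cstar_unital \<Rightarrow> 'a \<Rightarrow> 'a" where
  "lie a b = cs_scale (1 / (2 * \<i>)) (a * b - b * a)"

definition positive :: "'a::cstar_unital \<Rightarrow> bool" where
  "positive a \<longleftrightarrow> (\<exists>b. a = cs_star b * b)"

definition is_state :: "('a::cstar_unital \<Rightarrow> complex) \<Rightarrow> bool" where
  "is_state \<phi> \<longleftrightarrow>
     (\<forall>x y. \<phi> (x + y) = \<phi> x + \<phi> y) \<and>
     (\<forall>c x. \<phi> (cs_scale c x) = c * \<phi> x) \<and>
     \<phi> 1 = 1 \<and>
     (\<forall>a. positive a \<longrightarrow> Im (\<phi> a) = 0 \<and> Re (\<phi> a) \<ge> 0)"

definition states :: "('a::cstar_unital \<Rightarrow> complex) set" where
  "states = {\<phi>. is_state \<phi>}"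

definition weak_star_top :: "('a::cstar_unital \<Rightarrow> complex) topology" where
  "weak_star_top = subtopology (product_topology (\<lambda>_. euclidean) UNIV) states"

text \<open>Seminorms extended by \<infinity> outside their domain are functions into ereal.\<close>
definition ldom :: "('b \<Rightarrow> ereal) \<Rightarrow> 'b set" where
  "ldom L = {a. L a \<noteq> \<infinity>}"

definition mk :: "('a::cstar_unital \<Rightarrow> ereal) \<Rightarrow> ('a \<Rightarrow> complex) \<Rightarrow> ('a \<Rightarrow> complex) \<Rightarrow> ereal" where
  "mk L \<phi> \<psi> = (SUP a\<in>{a. sa a \<and> L a \<le> 1}. ereal (cmod (\<phi> a - \<psi> a)))"

definition admissible_F :: "(real \<Rightarrow> real \<Rightarrow> real \<Rightarrow> real \<Rightarrow> real) \<Rightarrow> bool" where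
  "admissible_F F \<longleftrightarrow>
     (\<forall>x1 x2 x3 x4 y1 y2 y3 y4. 0 \<le> x1 \<and> 0 \<le> x2 \<and> 0 \<le> x3 \<and> 0 \<le> x4 \<and>
        x1 \<le> y1 \<and> x2 \<le> y2 \<and> x3 \<le> y3 \<and> x4 \<le> y4 \<longrightarrow> F x1 x2 x3 x4 \<le> F y1 y2 y3 y4) \<and>
     (\<forall>x1 x2 x3 x4. 0 \<le> x1 \<and> 0 \<le> x2 \<and> 0 \<le> x3 \<and> 0 \<le> x4 \<longrightarrow>
        0 \<le> F x1 x2 x3 x4 \<and> x1 * x3 + x2 * x4 \<le> F x1 x2 x3 x4)"

definition admissible_triple ::
  "(real \<Rightarrow> real \<Rightarrow> real \<Rightarrow> real \<Rightarrow> real) \<Rightarrow> (real \<Rightarrow> real \<Rightarrow> real \<Rightarrow> real) \<Rightarrow> (real \<Rightarrow> real \<Rightarrow> real) \<Rightarrow> bool" where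
  "admissible_triple F G H \<longleftrightarrow>
     admissible_F F \<and>
     (\<forall>x y z x' y' z'. 0 \<le> x \<and> 0 \<le> y \<and> 0 \<le> z \<and> x \<le> x' \<and> y \<le> y' \<and> z \<le> z' \<longrightarrow> G x y z \<le> G x' y' z') \<and>
     (\<forall>x y z. 0 \<le> x \<and> 0 \<le> y \<and> 0 \<le> z \<longrightarrow> 0 \<le> G x y z \<and> (x + y) * z \<le> G x y z) \<and>
     (\<forall>x y x' y'. 0 \<le> x \<and> 0 \<le> y \<and> x \<le> x' \<and> y \<le> y' \<longrightarrow> H x y \<le> H x' y') \<and>
     (\<forall>x y. 0 \<le> x \<and> 0 \<le> y \<longrightarrow> 0 \<le> H x y \<and> 2 * x * y \<le> H x y)"

definition qqcms :: "(real \<Rightarrow> real \<Rightarrow> real \<Rightarrow> real \<Rightarrow> real) \<Rightarrow> ('a::cstar_unital \<Rightarrow> ereal) \<Rightarrow> bool" where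
  "qqcms F L \<longleftrightarrow>
     \<comment> \<open>seminorm on a dense real subspace of sa(A)\<close>
     (\<forall>a. 0 \<le> L a) \<and>
     ldom L \<subseteq> {a. sa a} \<and> 0 \<in> ldom L \<and>
     (\<forall>a\<in>ldom L. \<forall>b\<in>ldom L. a + b \<in> ldom L \<and> L (a + b) \<le> L a + L b) \<and>
     (\<forall>a\<in>ldom L. \<forall>t::real. t *\<^sub>R a \<in> ldom L \<and> L (t *\<^sub>R a) = ereal \<bar>t\<bar> * L a) \<and>
     {a. sa a} \<subseteq> closure (ldom L) \<and>
     \<comment> \<open>closed under Jordan and Lie products\<close>
     (\<forall>a\<in>ldom L. \<forall>b\<in>ldom L. jordan a b \<in> ldom L \<and> lie a b \<in> ldom L) \<and>
     \<comment> \<open>(i)\<close>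
     {a\<in>ldom L. L a = 0} = range (\<lambda>r::real. r *\<^sub>R (1::'a)) \<and>
     \<comment> \<open>(ii) mk_L is a metric on the state space metrizing the weak* topology\<close>
     (\<forall>\<phi>\<in>states. \<forall>\<psi>\<in>states. mk L \<phi> \<psi> \<noteq> \<infinity>) \<and>
     Metric_space (states :: ('a \<Rightarrow> complex) set) (\<lambda>\<phi> \<psi>. real_of_ereal (mk L \<phi> \<psi>)) \<and>
     Metric_space.mtopology (states :: ('a \<Rightarrow> complex) set) (\<lambda>\<phi> \<psi>. real_of_ereal (mk L \<phi> \<psi>))
        = weak_star_top \<and>
     \<comment> \<open>(iii)\<close>
     closed {a. L a \<le> 1} \<and>
     \<comment> \<open>(iv) quasi-Leibniz inequality\<close>
     (\<forall>a\<in>ldom L. \<forall>b\<in>ldom L.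
        max (L (jordan a b)) (L (lie a b))
          \<le> ereal (F (norm a) (norm b) (real_of_ereal (L a)) (real_of_ereal (L b))))"

definition hnorm :: "('m \<Rightarrow> 'm \<Rightarrow> 'a::cstar_unital) \<Rightarrow> 'm \<Rightarrow> real" where
  "hnorm inn \<omega> = sqrt (norm (inn \<omega> \<omega>))"

definition norm_top :: "('m::ab_group_add \<Rightarrow> real) \<Rightarrow> 'm topology" where
  "norm_top N = topology (\<lambda>U. \<forall>x\<in>U. \<exists>e>0. \<forall>y. N (y - x) < e \<longrightarrow> y \<in> U)"

definition hilbert_left_module ::
  "(complex \<Rightarrow> 'm::ab_group_add \<Rightarrow> 'm) \<Rightarrow> ('a::cstar_unital \<Rightarrow> 'm \<Rightarrow> 'm) \<Rightarrow> ('m \<Rightarrow> 'm \<Rightarrow> 'a) \<Rightarrow> bool" where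
  "hilbert_left_module scM act inn \<longleftrightarrow>
     \<comment> \<open>complex vector space\<close>
     (\<forall>c x y. scM c (x + y) = scM c x + scM c y) \<and>
     (\<forall>c d x. scM (c + d) x = scM c x + scM d x) \<and>
     (\<forall>c d x. scM c (scM d x) = scM (c * d) x) \<and>
     (\<forall>x. scM 1 x = x) \<and>
     \<comment> \<open>left A-module (compatible with scalars)\<close>
     (\<forall>a x y. act a (x + y) = act a x + act a y) \<and>
     (\<forall>a b x. act (a + b) x = act a x + act b x) \<and>
     (\<forall>a b x. act (a * b) x = act a (act b x)) \<and>
     (\<forall>c a x. act (cs_scale c a) x = scM c (act a x)) \<and>
     (\<forall>c a x. act a (scM c x) = scM c (act a x)) \<and>
     \<comment> \<open>A-valued inner product\<close>
     (\<forall>x y z. inn (x + y) z = inn x z + inn y z) \<and>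
     (\<forall>c x z. inn (scM c x) z = cs_scale c (inn x z)) \<and>
     (\<forall>a x y. inn (act a x) y = a * inn x y) \<and>
     (\<forall>x y. cs_star (inn x y) = inn y x) \<and>
     (\<forall>x. positive (inn x x)) \<and>
     (\<forall>x. inn x x = 0 \<longrightarrow> x = 0) \<and>
     \<comment> \<open>completeness for the norm sqrt(norm (inn x x))\<close>
     (\<forall>X::nat \<Rightarrow> 'm. (\<forall>e>0. \<exists>N. \<forall>m\<ge>N. \<forall>n\<ge>N. hnorm inn (X m - X n) < e) \<longrightarrow>
        (\<exists>l. \<forall>e>0. \<exists>N. \<forall>n\<ge>N. hnorm inn (X n - l) < e))"

definition A_weak_top :: "('m \<Rightarrow> 'm \<Rightarrow> 'a::cstar_unital) \<Rightarrow> 'm topology" where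
  "A_weak_top inn = topology_generated_by {{\<omega>. inn \<omega> \<eta> \<in> U} | \<eta> U. open U}"

definition mqvb ::
  "(real \<Rightarrow> real \<Rightarrow> real \<Rightarrow> real \<Rightarrow> real) \<Rightarrow> (real \<Rightarrow> real \<Rightarrow> real \<Rightarrow> real) \<Rightarrow> (real \<Rightarrow> real \<Rightarrow> real) \<Rightarrow>
   (complex \<Rightarrow> 'm::ab_group_add \<Rightarrow> 'm) \<Rightarrow> ('a::cstar_unital \<Rightarrow> 'm \<Rightarrow> 'm) \<Rightarrow> ('m \<Rightarrow> 'm \<Rightarrow> 'a) \<Rightarrow>
   ('m \<Rightarrow> ereal) \<Rightarrow> ('a \<Rightarrow> ereal) \<Rightarrow> bool" where
  "mqvb F G H scM act inn D L \<longleftrightarrow>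
     qqcms F L \<and>
     hilbert_left_module scM act inn \<and>
     \<comment> \<open>D is a norm on a dense complex subspace (extended by \<infinity>)\<close>
     (\<forall>\<omega>. 0 \<le> D \<omega>) \<and>
     0 \<in> ldom D \<and>
     (\<forall>x\<in>ldom D. \<forall>y\<in>ldom D. x + y \<in> ldom D \<and> D (x + y) \<le> D x + D y) \<and>
     (\<forall>x\<in>ldom D. \<forall>c. scM c x \<in> ldom D \<and> D (scM c x) = ereal (cmod c) * D x) \<and>
     (\<forall>x. D x = 0 \<longrightarrow> x = 0) \<and>
     UNIV \<subseteq> norm_top (hnorm inn) closure_of (ldom D) \<and>
     \<comment> \<open>(1)\<close>
     (\<forall>\<omega>. ereal (hnorm inn \<omega>) \<le> D \<omega>) \<and>
     \<comment> \<open>(2)\<close>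
     compactin (norm_top (hnorm inn)) {\<omega>. D \<omega> \<le> 1} \<and>
     \<comment> \<open>(3) (inequality asserted when both L a and D \<omega> are finite)\<close>
     (\<forall>a \<omega>. sa a \<and> a \<in> ldom L \<and> \<omega> \<in> ldom D \<longrightarrow>
        D (act a \<omega>) \<le> ereal (G (norm a) (real_of_ereal (L a)) (real_of_ereal (D \<omega>)))) \<and>
     \<comment> \<open>(4)\<close>
     (\<forall>\<omega>\<in>ldom D. \<forall>\<eta>\<in>ldom D.
        max (L (ReA (inn \<omega> \<eta>))) (L (ImA (inn \<omega> \<eta>)))
          \<le> ereal (H (real_of_ereal (D \<omega>)) (real_of_ereal (D \<eta>))))"

definition Dball :: "('m \<Rightarrow> ereal) \<Rightarrow> real \<Rightarrow> 'm set" where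
  "Dball D r = {\<omega>. D \<omega> \<le> ereal r}"

end

theory Submission
  imports Defs "HOL-Computational_Algebra.Formal_Power_Series"
begin

definition bet :: "nat \<Rightarrow> real" where "bet n = ((1/2::real) gchoose n) * (-1)^n"

lemma bet_poch: "bet n = pochhammer (-1/2) n / fact n"
proof -
  have "bet n = (-1)^n * pochhammer (-(1/2)) n / fact n * (-1)^n"
    unfolding bet_def gbinomial_pochhammer by simp
  also have "\<dots> = ((-1)^n * (-1)^n) * pochhammer (-1/2) n / fact n" by simp
  also have "(-1::real)^n * (-1)^n = 1" by (simp flip: power_mult_distrib)
  finally show ?thesis by simp
qed

lemma bet_0 [simp]: "bet 0 = 1" by (simp add: bet_def)

lemma bet_Suc_nonpos: "bet (Suc n) \<le> 0"
proof -
  have "pochhammer (-1/2::real) (Suc n) = (-1/2) * pochhammer (1/2) n"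
    by (simp add: pochhammer_rec)
  moreover have "pochhammer (1/2::real) n > 0" by (rule pochhammer_pos) simp
  ultimately show ?thesis by (simp add: bet_poch divide_nonpos_pos)
qed

lemma bet_partial: "(\<Sum>k\<le>m. bet k) \<ge> 0"
proof -
  have "(\<Sum>k\<le>m. bet k) = (-1)^m * ((1/2::real) - 1 gchoose m)"
    unfolding bet_def by (rule gbinomial_sum_lower_neg)
  also have "\<dots> = (-1)^m * ((-1)^m * pochhammer (1/2) m / fact m)"
    by (simp add: gbinomial_pochhammer)
  also have "\<dots> = ((-1)^m * (-1)^m) * pochhammer (1/2::real) m / fact m" by simp
  also have "(-1::real)^m * (-1)^m = 1" by (simp flip: power_mult_distrib)
  finally show ?thesis by (simp add: pochhammer_nonneg)
qed

lemma abs_bet_Suc: "\<bar>bet (Suc n)\<bar> = - bet (Suc n)"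
  using bet_Suc_nonpos by simp

lemma partial_abs_bet: "(\<Sum>k<m. \<bar>bet (Suc k)\<bar>) \<le> 1"
proof -
  have "(\<Sum>k\<le>m. bet k) = bet 0 + (\<Sum>k<m. bet (Suc k))"
    by (simp only: lessThan_Suc_atMost[symmetric] sum.lessThan_Suc_shift)
  then have "(\<Sum>k<m. bet (Suc k)) \<ge> -1" using bet_partial[of m] by simp
  then show ?thesis by (simp add: abs_bet_Suc sum_negf)
qed

lemma summable_abs_bet_Suc: "summable (\<lambda>n. \<bar>bet (Suc n)\<bar>)"
  by (rule summableI_nonneg_bounded[of _ 1]) (auto intro: partial_abs_bet)

lemma suminf_abs_bet_Suc: "(\<Sum>n. \<bar>bet (Suc n)\<bar>) \<le> 1"
  using summable_abs_bet_Suc partial_abs_bet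
  by (meson abs_ge_zero suminf_le_const)

lemma summable_abs_bet: "summable (\<lambda>n. \<bar>bet n\<bar>)"
  using summable_abs_bet_Suc summable_Suc_iff by blast

lemma bet_conv: "(\<Sum>i\<le>n. bet i * bet (n - i)) = (if n = 0 then 1 else if n = 1 then -1 else 0)"
proof -
  have "(\<Sum>i\<le>n. bet i * bet (n - i)) = (\<Sum>i\<le>n. ((1/2::real) gchoose i) * ((1/2) gchoose (n - i))) * (-1)^n"
    unfolding bet_def sum_distrib_right
    by (rule sum.cong) (auto simp: power_add[symmetric])
  also have "(\<Sum>i\<le>n. ((1/2::real) gchoose i) * ((1/2) gchoose (n - i))) = (1 gchoose n)"
    using gbinomial_Vandermonde[of "1/2::real" "1/2" n] by (simp add: atLeast0AtMost)
  also have "((1::real) gchoose n) = of_nat (1 choose n)"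
    by (metis binomial_gbinomial of_nat_1)
  finally show ?thesis
    by (cases n; cases "n - 1") auto
qed


definition invble :: "'a::ring_1 \<Rightarrow> bool" where
  "invble a \<longleftrightarrow> (\<exists>b. a * b = 1 \<and> b * a = 1)"

lemma invble_mult: "invble a \<Longrightarrow> invble b \<Longrightarrow> invble (a * b)"
  unfolding invble_def
proof (elim exE conjE)
  fix a' b' assume h: "a * a' = 1" "a' * a = 1" "b * b' = 1" "b' * b = 1"
  show "\<exists>c. a * b * c = 1 \<and> c * (a * b) = 1"
  proof (rule exI[of _ "b' * a'"], rule conjI)
    have "a * b * (b' * a') = a * (b * b') * a'" by (simp add: mult.assoc)
    then show "a * b * (b' * a') = 1" using h by simp
    have "b' * a' * (a * b) = b' * (a' * a) * b" by (simp add: mult.assoc)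
    then show "b' * a' * (a * b) = 1" using h by simp
  qed
qed

lemma invble_one [simp]: "invble 1" unfolding invble_def by auto

lemma invble_neg: "invble a \<Longrightarrow> invble (- a)"
  unfolding invble_def by (metis minus_mult_minus)

lemma invble_neg_iff: "invble (- a) \<longleftrightarrow> invble a"
  using invble_neg by fastforce

lemma invble_comm_left:
  assumes "a * b = b * a" "invble (a * b)" shows "invble a"
proof -
  from assms(2) obtain r where r: "a * b * r = 1" "r * (a * b) = 1" unfolding invble_def by blast
  have ar: "a * r = r * a"
  proof -
    have c: "(a * b) * a = a * (a * b)" using assms(1) by (metis mult.assoc)
    have "a * r = (r * (a * b)) * a * r" using r by simp
    also have "\<dots> = r * ((a * b) * a) * r" by (simp add: mult.assoc)
    also have "\<dots> = r * a * ((a * b) * r)" unfolding c by (simp add: mult.assoc)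
    also have "\<dots> = r * a" using r by simp
    finally show ?thesis .
  qed
  have "a * (b * r) = 1" using r by (simp add: mult.assoc)
  moreover have "(b * r) * a = 1"
    by (metis ar assms(1) mult.assoc r(1))
  ultimately show ?thesis unfolding invble_def by blast
qed

lemma invble_comm_right:
  assumes "a * b = b * a" "invble (a * b)" shows "invble b"
  using invble_comm_left[of b a] assms by simp

lemma neumann:
  fixes u :: "'a::{real_normed_algebra_1,banach}"
  assumes "norm u < 1"
  shows "\<exists>v. (1 - u) * v = 1 \<and> v * (1 - u) = 1 \<and> norm v \<le> 1 / (1 - norm u)"
proof -
  have sn: "summable (\<lambda>n. norm u ^ n)" using assms by (simp add: summable_geometric)
  have s: "summable (\<lambda>n. norm (u ^ n))"
    by (rule summable_comparison_test[OF _ sn]) (auto intro: norm_power_ineq)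
  then have s': "summable (\<lambda>n. u ^ n)" by (rule summable_norm_cancel)
  define v where "v = (\<Sum>n. u ^ n)"
  have lim: "(\<lambda>n. u ^ n) \<longlonglongrightarrow> 0" using assms by (rule LIMSEQ_power_zero)
  have tel: "(\<lambda>n. u ^ n - u ^ Suc n) sums (1 - 0)"
  proof -
    have "(\<lambda>n. uminus (u ^ Suc n) - uminus (u ^ n)) sums (0 - uminus (u ^ 0))"
      by (rule telescope_sums) (use tendsto_minus[OF lim] in auto)
    then show ?thesis by simp
  qed
  have "(1 - u) * v = (\<Sum>n. (1 - u) * u ^ n)" unfolding v_def by (rule suminf_mult[OF s', symmetric])
  also have "\<dots> = (\<Sum>n. u ^ n - u ^ Suc n)" by (simp add: algebra_simps)
  also have "\<dots> = 1" using tel sums_unique by force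
  finally have 1: "(1 - u) * v = 1" .
  have "v * (1 - u) = (\<Sum>n. u ^ n * (1 - u))" unfolding v_def by (rule suminf_mult2[OF s'])
  also have "\<dots> = (\<Sum>n. u ^ n - u ^ Suc n)" by (simp add: algebra_simps power_commutes)
  also have "\<dots> = 1" using tel sums_unique by force
  finally have 2: "v * (1 - u) = 1" .
  have "norm v \<le> (\<Sum>n. norm (u ^ n))" unfolding v_def by (rule summable_norm[OF s])
  also have "\<dots> \<le> (\<Sum>n. norm u ^ n)" by (rule suminf_le[OF _ s sn]) (rule norm_power_ineq)
  also have "\<dots> = 1 / (1 - norm u)" using assms by (simp add: suminf_geometric)
  finally show ?thesis using 1 2 by blast
qed

lemma neumann_invble:
  fixes u :: "'a::{real_normed_algebra_1,banach}"
  shows "norm u < 1 \<Longrightarrow> invble (1 - u)"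
  using neumann unfolding invble_def by blast

lemma perturb:
  fixes a b r :: "'a::{real_normed_algebra_1,banach}"
  assumes r: "a * r = 1" "r * a = 1" and small: "norm r * norm (a - b) \<le> 1/2"
  shows "\<exists>s. b * s = 1 \<and> s * b = 1 \<and> norm s \<le> 2 * norm r"
proof -
  define u where "u = r * (a - b)"
  have nu: "norm u \<le> 1/2" unfolding u_def using norm_mult_ineq[of r "a - b"] small by linarith
  then obtain v where v: "(1 - u) * v = 1" "v * (1 - u) = 1" "norm v \<le> 1 / (1 - norm u)"
    using neumann[of u] by force
  have "1 / (1 - norm u) \<le> 2" using nu norm_ge_zero[of u] by (simp add: field_simps)
  have bu: "b = a * (1 - u)" unfolding u_def using r by (simp add: algebra_simps mult.assoc[symmetric])
  have "b * (v * r) = 1" unfolding bu by (metis mult.assoc mult_1_left r(1) v(1))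
  moreover have "(v * r) * b = 1" unfolding bu by (metis mult.assoc mult_1_left r(2) v(2))
  moreover have "norm (v * r) \<le> 2 * norm r"
  proof -
    have "norm (v * r) \<le> norm v * norm r" by (rule norm_mult_ineq)
    also have "\<dots> \<le> 2 * norm r"
      using v(3) \<open>1 / (1 - norm u) \<le> 2\<close> by (intro mult_right_mono) auto
    finally show ?thesis .
  qed
  ultimately show ?thesis by blast
qed


context
begin

lemma star_zero [simp]: "cs_star (0::'a::cstar_unital) = 0"
  using cs_star_add[of "0::'a" 0] by simp

lemma star_minus: "cs_star (- x :: 'a::cstar_unital) = - cs_star x"
  using cs_star_add[of x "- x"] minus_unique[of "cs_star x" "cs_star (- x)"] by simp

lemma star_diff: "cs_star (x - y :: 'a::cstar_unital) = cs_star x - cs_star y"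
  using cs_star_add[of x "- y"] star_minus[of y] by simp

lemma star_one [simp]: "cs_star (1::'a::cstar_unital) = 1"
proof -
  have "cs_star (1::'a) = cs_star 1 * cs_star (cs_star 1)" by (simp add: cs_star_star)
  also have "\<dots> = cs_star (cs_star 1 * 1)" by (simp only: cs_star_mult)
  also have "\<dots> = 1" by (simp add: cs_star_star)
  finally show ?thesis .
qed

lemma star_scaleR: "cs_star (r *\<^sub>R x :: 'a::cstar_unital) = r *\<^sub>R cs_star x"
  by (metis cs_scale_of_real cs_star_scale complex_cnj_complex_of_real)

lemma star_of_real [simp]: "cs_star (of_real r :: 'a::cstar_unital) = of_real r"
  unfolding of_real_def by (simp add: star_scaleR)

lemma norm_star [simp]: "norm (cs_star x :: 'a::cstar_unital) = norm x"
proof -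
  have le: "norm y \<le> norm (cs_star y)" for y :: 'a
  proof (cases "y = 0")
    case False
    have "(norm y)^2 \<le> norm (cs_star y) * norm y"
      using cstar_identity[of y] norm_mult_ineq[of "cs_star y" y] by simp
    then show ?thesis using False by (simp add: power2_eq_square)
  qed simp
  show ?thesis using le[of x] le[of "cs_star x"] by (simp add: cs_star_star)
qed

lemma bl_star: "bounded_linear (cs_star :: 'a::cstar_unital \<Rightarrow> 'a)"
  by (rule bounded_linear_intro[of _ 1]) (auto simp: cs_star_add star_scaleR)

lemma star_power: "cs_star (x ^ n :: 'a::cstar_unital) = (cs_star x) ^ n"
  by (induction n) (simp_all add: cs_star_mult power_commutes)

lemma sa_power: "sa (h::'a::cstar_unital) \<Longrightarrow> sa (h ^ n)"
  unfolding sa_def by (simp add: star_power)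

lemma norm_sa_sq: "sa (h::'a::cstar_unital) \<Longrightarrow> norm (h * h) = (norm h)^2"
  unfolding sa_def using cstar_identity[of h] by simp

lemma star_suminf:
  "summable (f :: nat \<Rightarrow> 'a::cstar_unital) \<Longrightarrow> cs_star (suminf f) = (\<Sum>n. cs_star (f n))"
  using bounded_linear.suminf[OF bl_star, of f] by simp

definition csq :: "'a::cstar_unital \<Rightarrow> 'a" where
  "csq g = (\<Sum>n. bet n *\<^sub>R g ^ n)"

lemma csq_bound: "norm (g::'a::cstar_unital) \<le> 1 \<Longrightarrow> norm (bet n *\<^sub>R g ^ n) \<le> \<bar>bet n\<bar>"
proof -
  assume g: "norm g \<le> 1"
  have "norm (g ^ n) \<le> norm g ^ n" by (rule norm_power_ineq)
  also have "\<dots> \<le> 1" using g by (simp add: power_le_one)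
  finally show ?thesis by (simp add: mult_left_le del: scaleR_scaleR)
qed

lemma csq_summable: "norm (g::'a::cstar_unital) \<le> 1 \<Longrightarrow> summable (\<lambda>n. norm (bet n *\<^sub>R g ^ n))"
proof -
  assume g: "norm g \<le> 1"
  show ?thesis
    by (rule summable_comparison_test[OF _ summable_abs_bet], rule exI[of _ 0])
      (use csq_bound[OF g] in simp)
qed

lemma csq_summable': "norm (g::'a::cstar_unital) \<le> 1 \<Longrightarrow> summable (\<lambda>n. bet n *\<^sub>R g ^ n)"
  by (rule summable_norm_cancel, erule csq_summable)

lemma csq_sq:
  assumes "norm (g::'a::cstar_unital) \<le> 1"
  shows "csq g * csq g = 1 - g"
proof -
  have "csq g * csq g = (\<Sum>k. \<Sum>i\<le>k. (bet i *\<^sub>R g ^ i) * (bet (k - i) *\<^sub>R g ^ (k - i)))"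
    unfolding csq_def by (rule Cauchy_product[OF csq_summable[OF assms] csq_summable[OF assms]])
  also have "\<dots> = (\<Sum>k. (\<Sum>i\<le>k. bet i * bet (k - i)) *\<^sub>R g ^ k)"
  proof (rule suminf_cong)
    fix k
    have "(\<Sum>i\<le>k. (bet i *\<^sub>R g ^ i) * (bet (k - i) *\<^sub>R g ^ (k - i))) =
          (\<Sum>i\<le>k. (bet i * bet (k - i)) *\<^sub>R g ^ k)"
      by (rule sum.cong) (auto simp: power_add[symmetric])
    also have "\<dots> = (\<Sum>i\<le>k. bet i * bet (k - i)) *\<^sub>R g ^ k" by (simp add: scaleR_sum_left)
    finally show "(\<Sum>i\<le>k. (bet i *\<^sub>R g ^ i) * (bet (k - i) *\<^sub>R g ^ (k - i))) =
          (\<Sum>i\<le>k. bet i * bet (k - i)) *\<^sub>R g ^ k" .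
  qed
  also have "\<dots> = (\<Sum>k. (if k = 0 then 1 else if k = 1 then -1 else 0) *\<^sub>R g ^ k)"
    by (simp only: bet_conv)
  also have "\<dots> = (\<Sum>k\<in>{0,1}. (if k = 0 then 1 else if k = 1 then -1 else 0) *\<^sub>R g ^ k)"
    by (rule suminf_finite) auto
  also have "\<dots> = 1 - g" by simp
  finally show ?thesis .
qed

lemma csq_sa: "sa (g::'a::cstar_unital) \<Longrightarrow> norm g \<le> 1 \<Longrightarrow> sa (csq g)"
proof -
  assume h: "sa g" "norm g \<le> 1"
  have "cs_star (csq g) = (\<Sum>n. cs_star (bet n *\<^sub>R g ^ n))"
    unfolding csq_def by (rule star_suminf[OF csq_summable'[OF h(2)]])
  also have "\<dots> = csq g" unfolding csq_def
    using h(1) unfolding sa_def by (simp only: star_scaleR star_power)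
  finally show ?thesis unfolding sa_def .
qed

lemma csq_comm:
  assumes "norm (g::'a::cstar_unital) \<le> 1" "a * g = g * a"
  shows "a * csq g = csq g * a"
proof -
  have pc: "a * g ^ n = g ^ n * a" for n
  proof (induction n)
    case (Suc n)
    have "a * g ^ Suc n = (a * g) * g ^ n" by (simp add: mult.assoc)
    also have "\<dots> = g * (a * g ^ n)" by (simp add: assms(2) mult.assoc)
    also have "\<dots> = g ^ Suc n * a" using Suc by (simp add: mult.assoc)
    finally show ?case .
  qed simp
  have "a * csq g = (\<Sum>n. a * (bet n *\<^sub>R g ^ n))"
    unfolding csq_def by (rule suminf_mult[OF csq_summable'[OF assms(1)], symmetric])
  also have "\<dots> = (\<Sum>n. (bet n *\<^sub>R g ^ n) * a)" by (simp add: pc)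
  also have "\<dots> = csq g * a"
    unfolding csq_def by (rule suminf_mult2[OF csq_summable'[OF assms(1)], symmetric])
  finally show ?thesis .
qed

lemma csq_near_one:
  assumes "norm (g::'a::cstar_unital) \<le> 1"
  shows "norm (1 - csq g) \<le> 1"
proof -
  have s: "summable (\<lambda>n. bet n *\<^sub>R g ^ n)" by (rule csq_summable'[OF assms])
  have s1: "summable (\<lambda>n. norm (bet (Suc n) *\<^sub>R g ^ Suc n))"
    by (subst summable_Suc_iff[where f="\<lambda>n. norm (bet n *\<^sub>R g ^ n)"]) (rule csq_summable[OF assms])
  have e: "(\<Sum>n. bet (Suc n) *\<^sub>R g ^ Suc n) = csq g - 1"
    unfolding csq_def using suminf_split_head[OF s] by (simp only: bet_0 power_0 scaleR_one)
  have "norm (1 - csq g) = norm (\<Sum>n. bet (Suc n) *\<^sub>R g ^ Suc n)"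
    unfolding e by (rule norm_minus_commute)
  also have "\<dots> \<le> (\<Sum>n. norm (bet (Suc n) *\<^sub>R g ^ Suc n))" by (rule summable_norm[OF s1])
  also have "\<dots> \<le> (\<Sum>n. \<bar>bet (Suc n)\<bar>)"
    by (rule suminf_le[OF _ s1 summable_abs_bet_Suc]) (rule csq_bound[OF assms])
  also have "\<dots> \<le> 1" by (rule suminf_abs_bet_Suc)
  finally show ?thesis .
qed

end


lemma cs_scale_one: "cs_scale 1 (x::'a::cstar_unital) = x"
  using cs_scale_of_real[of 1 x] by simp

lemma cs_scale_zero: "cs_scale 0 (x::'a::cstar_unital) = 0"
  using cs_scale_of_real[of 0 x] by simp

lemma cs_scale_neg: "cs_scale (- c) (x::'a::cstar_unital) = - cs_scale c x"
  using cs_scale_add_left[of c "- c" x] cs_scale_zero[of x]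
    minus_unique[of "cs_scale c x" "cs_scale (- c) x"] by simp

lemma invble_scaleR: "invble (x::'a::real_normed_algebra_1) \<Longrightarrow> r \<noteq> 0 \<Longrightarrow> invble (r *\<^sub>R x)"
  unfolding invble_def
  by (elim exE conjE, rule_tac x="(1/r) *\<^sub>R b" in exI) simp

lemma invble_of_real: "r \<noteq> 0 \<Longrightarrow> invble (of_real r :: 'a::real_normed_algebra_1)"
  unfolding of_real_def by (rule invble_scaleR) simp_all

lemma neumann_real:
  fixes a :: "'a::{real_normed_algebra_1,banach}"
  assumes "norm a < \<bar>\<mu>\<bar>"
  shows "invble (of_real \<mu> - a)"
proof -
  have mu: "\<mu> \<noteq> 0" using assms norm_ge_zero[of a] by linarith
  have "norm ((1/\<mu>) *\<^sub>R a) < 1" using assms mu by (simp add: field_simps)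
  then have "invble (1 - (1/\<mu>) *\<^sub>R a)" by (rule neumann_invble)
  then have "invble (\<mu> *\<^sub>R (1 - (1/\<mu>) *\<^sub>R a))" using mu by (rule invble_scaleR)
  moreover have "\<mu> *\<^sub>R (1 - (1/\<mu>) *\<^sub>R a) = of_real \<mu> - a"
    using mu by (simp add: scaleR_diff_right of_real_def)
  ultimately show ?thesis by simp
qed

lemma not_invble_bound:
  fixes a :: "'a::{real_normed_algebra_1,banach}"
  shows "\<not> invble (of_real \<mu> - a) \<Longrightarrow> \<bar>\<mu>\<bar> \<le> norm a"
  by (metis neumann_real not_le)

definition jj :: "real \<Rightarrow> 'a::cstar_unital" where
  "jj t = cs_scale (\<i> * complex_of_real t) 1"

lemma jj_left: "jj t * x = cs_scale (\<i> * complex_of_real t) x"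
  unfolding jj_def by (simp add: cs_scale_mult_left)

lemma jj_right: "x * jj t = cs_scale (\<i> * complex_of_real t) x"
  unfolding jj_def by (simp add: cs_scale_mult_right)

lemma jj_comm: "jj t * x = x * jj t"
  by (simp add: jj_left jj_right)

lemma jj_sq: "jj s * jj t = - of_real (s * t)"
proof -
  have "jj s * jj t = cs_scale (\<i> * complex_of_real s) (cs_scale (\<i> * complex_of_real t) 1)"
    by (simp only: jj_left) (simp add: jj_def)
  also have "\<dots> = cs_scale (complex_of_real (- (s * t))) 1"
    by (simp add: cs_scale_scale algebra_simps)
  also have "\<dots> = - of_real (s * t)" by (subst cs_scale_of_real) (simp add: of_real_def)
  finally show ?thesis .
qed

lemma jj_neg: "jj (- t) = - jj t"
  unfolding jj_def by (simp add: cs_scale_neg)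

lemma star_jj: "cs_star (jj t) = - jj t"
  unfolding jj_def by (simp add: cs_star_scale cs_scale_neg)

lemma norm_jj_minus:
  "cmod (\<i> * complex_of_real t) > norm a \<Longrightarrow> invble (jj t - (a::'a::cstar_unital))"
proof -
  assume h: "cmod (\<i> * complex_of_real t) > norm a"
  have t0: "t \<noteq> 0" using h norm_ge_zero[of a] by auto
  have n: "norm (cs_scale (1 / (\<i> * complex_of_real t)) a) < 1"
    using h t0 by (simp add: norm_cs_scale norm_mult norm_divide field_simps)
  then have "invble (1 - cs_scale (1 / (\<i> * complex_of_real t)) a)" by (rule neumann_invble)
  moreover have "invble (jj t :: 'a)"
  proof -
    have "jj t * jj (- 1 / t) = (1::'a)" "jj (- 1 / t) * jj t = (1::'a)"
      using t0 by (simp_all add: jj_sq)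
    then show ?thesis unfolding invble_def by blast
  qed
  ultimately have "invble (jj t * (1 - cs_scale (1 / (\<i> * complex_of_real t)) a))"
    by (simp add: invble_mult)
  moreover have "jj t * (1 - cs_scale (1 / (\<i> * complex_of_real t)) a) = jj t - a"
    using t0 by (simp add: right_diff_distrib jj_left cs_scale_scale cs_scale_one)
  ultimately show ?thesis by simp
qed

lemma sa_imag_invble:
  assumes "sa (h::'a::cstar_unital)" "\<beta> \<noteq> 0"
  shows "invble (jj \<beta> - h)"
proof (rule ccontr)
  assume ni: "\<not> invble (jj \<beta> - h)"
  have bound: "(\<beta> + t)^2 \<le> (norm h)^2 + t^2" for t
  proof -
    have e: "jj \<beta> - h = jj (\<beta> + t) - (h + jj t)"
      unfolding jj_def by (simp add: cs_scale_add_left distrib_left)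
    have "\<not> invble (jj (\<beta> + t) - (h + jj t))" unfolding e[symmetric] using ni .
    then have "cmod (\<i> * complex_of_real (\<beta> + t)) \<le> norm (h + jj t)"
      using norm_jj_minus by force
    then have 1: "\<bar>\<beta> + t\<bar> \<le> norm (h + jj t)" by (simp add: norm_mult del: of_real_add)
    have "cs_star (h + jj t) * (h + jj t) = h * h + of_real (t * t)"
      using assms(1) unfolding sa_def
      by (simp add: cs_star_add star_jj algebra_simps jj_sq jj_comm[of t h])
    then have "(norm (h + jj t))^2 = norm (h * h + of_real (t * t))"
      using cstar_identity[of "h + jj t"] by simp
    also have "\<dots> \<le> norm (h * h) + norm (of_real (t * t) :: 'a)" by (rule norm_triangle_ineq)
    also have "\<dots> \<le> (norm h)^2 + t^2"
      using norm_mult_ineq[of h h] norm_of_real[of "t * t", where 'a='a]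
      by (simp add: power2_eq_square del: of_real_mult)
    finally have "(norm (h + jj t))^2 \<le> (norm h)^2 + t^2" .
    moreover have "(\<beta> + t)^2 \<le> (norm (h + jj t))^2"
      using 1 by (metis abs_ge_zero power2_abs power_mono)
    ultimately show ?thesis by linarith
  qed
  define t where "t = ((norm h)^2 + 1) / (2 * \<beta>)"
  have "2 * \<beta> * t = (norm h)^2 + 1" unfolding t_def using assms(2) by simp
  moreover have "(\<beta> + t)^2 = \<beta>^2 + 2 * \<beta> * t + t^2" by (simp add: power2_eq_square algebra_simps)
  ultimately show False using bound[of t] by (smt (verit) zero_le_power2)
qed

lemma sq_plus_invble:
  assumes "sa (s::'a::cstar_unital)" "\<beta> \<noteq> 0"
  shows "invble (s * s + of_real (\<beta> * \<beta>))"
proof -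
  have "invble ((jj \<beta> - s) * (jj (- \<beta>) - s))"
    using sa_imag_invble[OF assms] sa_imag_invble[OF assms(1), of "- \<beta>"] assms(2)
    by (simp add: invble_mult)
  moreover have "(jj \<beta> - s) * (jj (- \<beta>) - s) = s * s + of_real (\<beta> * \<beta>)"
    by (simp add: algebra_simps jj_sq jj_comm[of _ s] jj_neg)
  ultimately show ?thesis by simp
qed

definition pos :: "'a::cstar_unital \<Rightarrow> bool" where
  "pos a \<longleftrightarrow> sa a \<and> (\<forall>\<mu>::real. \<mu> < 0 \<longrightarrow> invble (of_real \<mu> - a))"

lemma sa_add: "sa a \<Longrightarrow> sa b \<Longrightarrow> sa (a + b)" unfolding sa_def by (simp add: cs_star_add)
lemma sa_diff: "sa a \<Longrightarrow> sa b \<Longrightarrow> sa (a - b)" unfolding sa_def by (simp add: star_diff)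
lemma sa_scaleR: "sa a \<Longrightarrow> sa (r *\<^sub>R a)" unfolding sa_def by (simp add: star_scaleR)
lemma sa_of_real: "sa (of_real r :: 'a::cstar_unital)" unfolding sa_def by simp
lemma sa_mult_comm: "sa a \<Longrightarrow> sa b \<Longrightarrow> a * b = b * a \<Longrightarrow> sa (a * b)"
  unfolding sa_def by (simp add: cs_star_mult)
lemma sa_neg: "sa a \<Longrightarrow> sa (- a)" unfolding sa_def by (simp add: star_minus)

lemma pos_sq: "sa (s::'a::cstar_unital) \<Longrightarrow> pos (s * s)"
  unfolding pos_def
proof (intro conjI allI impI)
  assume s: "sa s"
  then show "sa (s * s)" by (simp add: sa_mult_comm)
  fix \<mu> :: real assume "\<mu> < 0"
  define \<beta> where "\<beta> = sqrt (- \<mu>)"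
  have b: "\<beta> \<noteq> 0" "\<beta> * \<beta> = - \<mu>" unfolding \<beta>_def using \<open>\<mu> < 0\<close> by auto
  have e: "- (s * s + of_real (\<beta> * \<beta>)) = of_real \<mu> - s * s" unfolding b(2) by simp
  show "invble (of_real \<mu> - s * s)" unfolding e[symmetric]
    by (rule invble_neg, rule sq_plus_invble[OF s b(1)])
qed


lemma jj_assoc1: "x * (jj t * y) = jj t * (x * y)"
  by (metis jj_comm mult.assoc)

lemma comm_trick:
  fixes h w :: "'a::cstar_unital"
  assumes "sa h" "sa w" "h * w = w * h"
  shows "(norm h)^2 \<le> norm (h * h + w * w)"
proof -
  define j where "j = (jj 1 :: 'a)"
  define z where "z = h + j * w"
  have sjw: "cs_star (j * w) = - (j * w)"
    using assms(2) unfolding j_def sa_def by (simp add: cs_star_mult star_jj jj_comm)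
  have sz: "cs_star z = h - j * w"
    using assms(1) sjw unfolding z_def sa_def by (simp add: cs_star_add)
  have j: "j * j = -1" unfolding j_def by (simp add: jj_sq)
  have a1: "h * (j * w) = j * (h * w)" unfolding j_def by (rule jj_assoc1)
  have a2: "(j * w) * h = j * (w * h)" by (simp add: mult.assoc)
  have a3: "(j * w) * (j * w) = (j * j) * (w * w)" unfolding j_def
    by (metis jj_assoc1 mult.assoc)
  have "cs_star z * z = h * h + h * (j * w) - (j * w) * h - (j * w) * (j * w)"
    unfolding sz unfolding z_def by (simp add: left_diff_distrib distrib_left)
  also have "\<dots> = h * h + w * w" unfolding a1 a2 a3 j using assms(3) by simp
  finally have zz: "cs_star z * z = h * h + w * w" .
  have "z + cs_star z = 2 *\<^sub>R h" unfolding sz unfolding z_def by (simp add: scaleR_2)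
  then have "2 * norm h \<le> norm z + norm (cs_star z)"
    by (metis norm_scaleR norm_triangle_ineq abs_numeral)
  then have "norm h \<le> norm z" by simp
  then have "(norm h)^2 \<le> (norm z)^2" by (simp add: power_mono)
  also have "\<dots> = norm (h * h + w * w)" using cstar_identity[of z] zz by simp
  finally show ?thesis .
qed


lemma inv_unique: "a * b = 1 \<Longrightarrow> c * a = 1 \<Longrightarrow> b = (c::'a::ring_1)"
  by (metis mult.assoc mult_1_left mult_1_right)

lemma key_A:
  fixes h :: "'a::cstar_unital"
  assumes sah: "sa h" and nh: "norm h = 1"
  shows "\<not> invble (1 - h * h)"
proof
  assume "invble (1 - h * h)"
  then obtain R where R: "(1 - h * h) * R = 1" "R * (1 - h * h) = 1" unfolding invble_def by blast
  define k where "k = h * h"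
  define N where "N = norm R"
  have "R \<noteq> 0" using R(1) by auto
  then have N0: "N > 0" unfolding N_def by simp
  define M where "M = 2 * N + 1"
  define \<epsilon> where "\<epsilon> = 1 / (2 * M)"
  have M0: "M > 0" "M \<ge> 1" unfolding M_def using N0 by auto
  have eps: "\<epsilon> > 0" "\<epsilon> < 1 / M" "N * \<epsilon> \<le> 1/2"
    unfolding \<epsilon>_def using M0 N0 by (auto simp: field_simps M_def)
  have sak: "sa k" unfolding k_def using sah by (simp add: sa_mult_comm)
  have nk: "norm k = 1" unfolding k_def using norm_sa_sq[OF sah] nh by simp
  define g where "g = of_real (1 + \<epsilon>) - k"
  have "(1 - k) - g = - of_real \<epsilon>" unfolding g_def by simp
  then have "norm ((1 - k) - g) = \<epsilon>" using eps by simp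
  then have "norm R * norm ((1 - k) - g) \<le> 1/2" using eps unfolding N_def by simp
  then obtain S where S: "g * S = 1" "S * g = 1" "norm S \<le> 2 * N"
    using perturb[of "1 - k" R g] R unfolding k_def N_def by auto
  define q where "q = (1 / (1 + \<epsilon>)) *\<^sub>R k"
  have nq: "norm q \<le> 1" unfolding q_def using nk eps by simp
  have saq: "sa q" unfolding q_def using sak by (rule sa_scaleR)
  have hq: "h * q = q * h" unfolding q_def k_def by (simp add: mult.assoc)
  define c where "c = sqrt (1 + \<epsilon>) *\<^sub>R csq q"
  have cc: "c * c = g"
  proof -
    have "c * c = (sqrt (1 + \<epsilon>) * sqrt (1 + \<epsilon>)) *\<^sub>R (csq q * csq q)" unfolding c_def by simp
    also have "\<dots> = (1 + \<epsilon>) *\<^sub>R (1 - q)" using eps by (simp add: csq_sq[OF nq])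
    also have "\<dots> = g" unfolding g_def q_def using eps by (simp add: scaleR_diff_right of_real_def)
    finally show ?thesis .
  qed
  have sac: "sa c" unfolding c_def by (rule sa_scaleR, rule csq_sa[OF saq nq])
  have hc: "h * c = c * h" unfolding c_def using csq_comm[OF nq hq] by simp
  have "invble (c * c)" unfolding cc invble_def using S by blast
  then have "invble c" by (rule invble_comm_left[OF refl])
  then obtain e where e: "c * e = 1" "e * c = 1" unfolding invble_def by blast
  have ee: "e * e = S"
  proof -
    have "(c * c) * (e * e) = 1" using e by (metis mult.assoc mult_1_left)
    then show ?thesis using S(2) cc inv_unique by metis
  qed
  have sae: "sa e"
  proof -
    have "cs_star e * c = 1" using e(1) sac unfolding sa_def by (metis cs_star_mult star_one)
    then show ?thesis unfolding sa_def using e(1) inv_unique by metis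
  qed
  have he: "h * e = e * h"
  proof -
    have "e * h = e * h * (c * e)" using e by simp
    also have "\<dots> = e * (h * c) * e" by (simp add: mult.assoc)
    also have "\<dots> = (e * c) * h * e" unfolding hc by (simp add: mult.assoc)
    also have "\<dots> = h * e" using e by simp
    finally show ?thesis by simp
  qed
  define r2 where "r2 = (1 / M) *\<^sub>R (e * e)"
  have nr2: "norm r2 \<le> 1"
  proof -
    have "norm r2 = norm S / M" unfolding r2_def ee using M0 by simp
    also have "\<dots> \<le> 2 * N / M" using S(3) M0 by (simp add: divide_right_mono)
    also have "\<dots> \<le> 1" unfolding M_def using N0 by simp
    finally show ?thesis .
  qed
  have sar2: "sa r2" unfolding r2_def by (rule sa_scaleR, rule sa_mult_comm[OF sae sae refl])
  have cr2: "c * r2 = r2 * c" unfolding r2_def using e by (simp add: mult.assoc[symmetric])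
    (metis e(1) e(2) mult.assoc mult_1_left mult_1_right)
  have hr2: "h * r2 = r2 * h" unfolding r2_def using he by (simp add: mult.assoc[symmetric])
    (metis he mult.assoc)
  define f where "f = csq r2"
  have ff: "f * f = 1 - r2" unfolding f_def by (rule csq_sq[OF nr2])
  have saf: "sa f" unfolding f_def by (rule csq_sa[OF sar2 nr2])
  have fc: "c * f = f * c" unfolding f_def by (rule csq_comm[OF nr2 cr2])
  have hf: "h * f = f * h" unfolding f_def by (rule csq_comm[OF nr2 hr2])
  define w where "w = f * c"
  have saw: "sa w" unfolding w_def by (rule sa_mult_comm[OF saf sac fc[symmetric]])
  have hw: "h * w = w * h" unfolding w_def by (metis hc hf mult.assoc)
  have ww: "w * w = g - of_real (1 / M)"
  proof -
    have "w * w = (f * f) * (c * c)" unfolding w_def by (metis fc mult.assoc)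
    also have "\<dots> = (1 - r2) * g" unfolding ff cc ..
    also have "\<dots> = g - (1 / M) *\<^sub>R (S * g)" unfolding r2_def ee by (simp add: left_diff_distrib)
    also have "\<dots> = g - of_real (1 / M)" using S(2) by (simp add: of_real_def)
    finally show ?thesis .
  qed
  have "(norm h)^2 \<le> norm (h * h + w * w)" by (rule comm_trick[OF sah saw hw])
  also have "h * h + w * w = of_real (1 + \<epsilon> - 1 / M)" unfolding ww g_def k_def by simp
  also have "norm (of_real (1 + \<epsilon> - 1 / M) :: 'a) = 1 + \<epsilon> - 1 / M"
  proof -
    have "1 / M \<le> 1" using M0 by simp
    then show ?thesis using eps by (simp only: norm_of_real)
  qed
  finally show False using eps nh by simp
qed


lemma spec_norm:
  fixes h :: "'a::cstar_unital"
  assumes sah: "sa h" and h0: "h \<noteq> 0"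
  shows "\<exists>lm. (lm = norm h \<or> lm = - norm h) \<and> \<not> invble (of_real lm - h)"
proof (rule ccontr)
  assume "\<not> ?thesis"
  then have i1: "invble (of_real (norm h) - h)" and i2: "invble (of_real (- norm h) - h)" by auto
  define n where "n = norm h"
  have n0: "n > 0" unfolding n_def using h0 by simp
  define h' where "h' = (1 / n) *\<^sub>R h"
  have sah': "sa h'" unfolding h'_def using sah by (rule sa_scaleR)
  have nh': "norm h' = 1" unfolding h'_def n_def using h0 by simp
  have e1: "1 - h' = (1 / n) *\<^sub>R (of_real n - h)"
    unfolding h'_def using n0 by (simp add: scaleR_diff_right of_real_def)
  have e2: "1 + h' = (- 1 / n) *\<^sub>R (of_real (- n) - h)"
    unfolding h'_def using n0 by (simp add: scaleR_diff_right of_real_def)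
  have "invble (1 - h')" unfolding e1 using i1 n0 unfolding n_def by (simp add: invble_scaleR)
  moreover have "invble (1 + h')" unfolding e2 by (rule invble_scaleR) (use i2 n0 in \<open>simp_all add: n_def\<close>)
  ultimately have "invble ((1 - h') * (1 + h'))" by (rule invble_mult)
  moreover have "(1 - h') * (1 + h') = 1 - h' * h'" by (simp add: algebra_simps)
  ultimately show False using key_A[OF sah' nh'] by simp
qed

lemma pos_sa: "pos a \<Longrightarrow> sa a" unfolding pos_def by simp

lemma pos_invble: "pos a \<Longrightarrow> \<mu> < 0 \<Longrightarrow> invble (of_real \<mu> - a)" unfolding pos_def by simp

lemma pos_spec: "pos a \<Longrightarrow> \<not> invble (of_real \<mu> - a) \<Longrightarrow> \<mu> \<ge> 0"
  by (metis pos_invble not_le)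

lemma pos_norm:
  fixes a :: "'a::cstar_unital"
  assumes pa: "pos a"
  shows "norm (of_real (norm a) - a) \<le> norm a"
proof (cases "of_real (norm a) - a = (0::'a)")
  case False
  define g where "g = of_real (norm a) - a"
  have sag: "sa g" unfolding g_def using pos_sa[OF pa] by (simp add: sa_diff sa_of_real)
  obtain lm where l: "lm = norm g \<or> lm = - norm g" "\<not> invble (of_real lm - g)"
    using spec_norm[OF sag] False unfolding g_def by blast
  have "of_real lm - g = - (of_real (norm a - lm) - a)" unfolding g_def by simp
  then have ni: "\<not> invble (of_real (norm a - lm) - a)" using l(2) invble_neg by metis
  have "norm a - lm \<ge> 0" using pos_spec[OF pa ni] .
  moreover have "\<bar>norm a - lm\<bar> \<le> norm a" by (rule not_invble_bound[OF ni])
  ultimately show ?thesis using l(1) unfolding g_def by auto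
qed simp

lemma norm_pos:
  fixes a :: "'a::cstar_unital"
  assumes "sa a" "norm (of_real t - a) \<le> t"
  shows "pos a"
  unfolding pos_def
proof (intro conjI allI impI)
  show "sa a" by fact
  fix \<mu> :: real assume "\<mu> < 0"
  have "invble (of_real (t - \<mu>) - (of_real t - a))"
    by (rule neumann_real) (use assms(2) \<open>\<mu> < 0\<close> in auto)
  then have "invble (- (of_real (t - \<mu>) - (of_real t - a)))" by (rule invble_neg)
  moreover have "- (of_real (t - \<mu>) - (of_real t - a)) = of_real \<mu> - a" by simp
  ultimately show "invble (of_real \<mu> - a)" by simp
qed

lemma pos_add:
  fixes a b :: "'a::cstar_unital"
  assumes "pos a" "pos b" shows "pos (a + b)"
proof (rule norm_pos)
  show "sa (a + b)" using assms by (simp add: pos_sa sa_add)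
  have "of_real (norm a + norm b) - (a + b) = (of_real (norm a) - a) + (of_real (norm b) - b)"
    by simp
  then have "norm (of_real (norm a + norm b) - (a + b)) \<le> norm (of_real (norm a) - a) + norm (of_real (norm b) - b)"
    by (metis norm_triangle_ineq)
  also have "\<dots> \<le> norm a + norm b" using pos_norm[OF assms(1)] pos_norm[OF assms(2)] by simp
  finally show "norm (of_real (norm a + norm b) - (a + b)) \<le> norm a + norm b" .
qed

lemma pos_scale:
  fixes a :: "'a::cstar_unital"
  assumes "pos a" "r \<ge> 0" shows "pos (r *\<^sub>R a)"
  unfolding pos_def
proof (intro conjI allI impI)
  show "sa (r *\<^sub>R a)" using assms by (simp add: pos_sa sa_scaleR)
  fix \<mu> :: real assume m: "\<mu> < 0"
  show "invble (of_real \<mu> - r *\<^sub>R a)"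
  proof (cases "r = 0")
    case True then show ?thesis using m by (simp add: invble_of_real)
  next
    case False
    then have r: "r > 0" using assms by simp
    have "invble (r *\<^sub>R (of_real (\<mu> / r) - a))"
      using pos_invble[OF assms(1)] m r False by (simp add: invble_scaleR divide_neg_pos)
    moreover have "r *\<^sub>R (of_real (\<mu> / r) - a) = of_real \<mu> - r *\<^sub>R a"
      using r by (simp add: scaleR_diff_right of_real_def)
    ultimately show ?thesis by simp
  qed
qed

lemma pos_zero: "pos (0::'a::cstar_unital)"
  by (rule norm_pos) (auto simp: sa_def)

lemma pos_antisym:
  fixes a :: "'a::cstar_unital"
  assumes "pos a" "pos (- a)" shows "a = 0"
proof (rule ccontr)
  assume a0: "a \<noteq> 0"
  obtain lm where l: "lm = norm a \<or> lm = - norm a" "\<not> invble (of_real lm - a)"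
    using spec_norm[OF pos_sa[OF assms(1)] a0] by blast
  have "lm \<ge> 0" using pos_spec[OF assms(1) l(2)] .
  then have lpos: "lm > 0" using l(1) a0 by auto
  have "invble (of_real (- lm) - (- a))" by (rule pos_invble[OF assms(2)]) (use lpos in simp)
  then have "invble (- (of_real lm - a))" by simp
  then show False using l(2) invble_neg_iff by blast
qed

lemma pos_mono:
  fixes a b :: "'a::cstar_unital"
  assumes pa: "pos a" and pb: "pos b" shows "norm a \<le> norm (a + b)"
proof (cases "a = 0")
  case False
  define t where "t = norm (a + b)"
  have p1: "pos (of_real t - (a + b))"
    unfolding pos_def
  proof (intro conjI allI impI)
    show "sa (of_real t - (a + b))" using pa pb by (simp add: pos_sa sa_add sa_diff sa_of_real)
    fix \<mu> :: real assume m: "\<mu> < 0"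
    have "invble (of_real (t - \<mu>) - (a + b))" by (rule neumann_real) (use m in \<open>auto simp: t_def\<close>)
    then have "invble (- (of_real (t - \<mu>) - (a + b)))" by (rule invble_neg)
    moreover have "- (of_real (t - \<mu>) - (a + b)) = of_real \<mu> - (of_real t - (a + b))" by simp
    ultimately show "invble (of_real \<mu> - (of_real t - (a + b)))" by metis
  qed
  have p2: "pos (of_real t - a)" using pos_add[OF p1 pb] by simp
  obtain lm where l: "lm = norm a \<or> lm = - norm a" "\<not> invble (of_real lm - a)"
    using spec_norm[OF pos_sa[OF pa] False] by blast
  have "lm \<ge> 0" using pos_spec[OF pa l(2)] .
  then have ln: "lm = norm a" using l(1) by auto
  have "of_real (t - lm) - (of_real t - a) = - (of_real lm - a)" by simp
  then have "\<not> invble (of_real (t - lm) - (of_real t - a))" using l(2) invble_neg_iff by metis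
  then have "t - lm \<ge> 0" by (rule pos_spec[OF p2])
  then show ?thesis using ln unfolding t_def by simp
qed simp


lemma pos_cube:
  fixes a :: "'a::cstar_unital"
  assumes pa: "pos a" shows "pos (a * a * a)"
  unfolding pos_def
proof (intro conjI allI impI)
  have saa: "sa a" using pa by (rule pos_sa)
  then show "sa (a * a * a)" by (simp add: sa_mult_comm mult.assoc)
  fix \<mu> :: real assume m: "\<mu> < 0"
  define cc where "cc = root 3 (- \<mu>)"
  have cc0: "cc > 0" unfolding cc_def using m by simp
  have cc3: "cc * cc * cc = - \<mu>"
    unfolding cc_def using odd_real_root_pow[of 3 "- \<mu>"] by (simp add: power3_eq_cube)
  define s where "s = a - of_real (cc / 2)"
  define \<beta> where "\<beta> = sqrt 3 * cc / 2"
  have b0: "\<beta> \<noteq> 0" unfolding \<beta>_def using cc0 by simp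
  have bb: "\<beta> * \<beta> = 3 * cc * cc / 4" unfolding \<beta>_def by (simp add: algebra_simps)
  have sas: "sa s" unfolding s_def using saa by (simp add: sa_diff sa_of_real)
  have i1: "invble (s * s + of_real (\<beta> * \<beta>))" by (rule sq_plus_invble[OF sas b0])
  have i2: "invble (of_real (- cc) - a)" by (rule pos_invble[OF pa]) (use cc0 in simp)
  have h2: "(cc/2) *\<^sub>R a + (cc/2) *\<^sub>R a = cc *\<^sub>R a"
    by (metis scaleR_add_left field_sum_of_halves)
  have h3: "(cc * cc / 4) *\<^sub>R (1::'a) + (3 * cc * cc / 4) *\<^sub>R 1 = (cc * cc) *\<^sub>R 1"
    by (simp add: scaleR_add_left[symmetric])
  have "s * s = a * a - ((cc/2) *\<^sub>R a + (cc/2) *\<^sub>R a) + (cc / 2 * (cc / 2)) *\<^sub>R 1"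
    unfolding s_def by (simp add: algebra_simps of_real_def)
  then have P: "s * s = a * a - cc *\<^sub>R a + (cc * cc / 4) *\<^sub>R 1" unfolding h2 by simp
  have Q: "of_real (\<beta> * \<beta>) = (3 * cc * cc / 4) *\<^sub>R (1::'a)" unfolding bb by (simp add: of_real_def)
  have "s * s + of_real (\<beta> * \<beta>) = a * a - cc *\<^sub>R a + ((cc * cc / 4) *\<^sub>R 1 + (3 * cc * cc / 4) *\<^sub>R 1)"
    unfolding P Q by (simp only: add.assoc)
  then have e1: "s * s + of_real (\<beta> * \<beta>) = a * a - cc *\<^sub>R a + (cc * cc) *\<^sub>R 1"
    unfolding h3 .
  have e2: "of_real (- cc) - a = - (cc *\<^sub>R 1 + a)" by (simp add: of_real_def)
  have "(cc *\<^sub>R 1 + a) * (a * a - cc *\<^sub>R a + (cc * cc) *\<^sub>R 1) = (cc * cc * cc) *\<^sub>R 1 + a * a * a"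
    by (simp add: algebra_simps)
  then have e3: "- ((- (cc *\<^sub>R 1 + a)) * (s * s + of_real (\<beta> * \<beta>))) = - (of_real \<mu> - a * a * a)"
    unfolding e1 cc3 by (simp add: of_real_def del: minus_add_distrib)
  have "invble (- ((- (cc *\<^sub>R 1 + a)) * (s * s + of_real (\<beta> * \<beta>))))"
    by (rule invble_neg, rule invble_mult[OF _ i1]) (use i2 e2 in simp)
  then show "invble (of_real \<mu> - a * a * a)" unfolding e3 by (rule iffD1[OF invble_neg_iff])
qed

lemma abba:
  fixes a b :: "'a::cstar_unital"
  assumes n0: "\<nu> \<noteq> 0" and i: "invble (of_real \<nu> - a * b)"
  shows "invble (of_real \<nu> - b * a)"
proof -
  obtain R where R: "(of_real \<nu> - a * b) * R = 1" "R * (of_real \<nu> - a * b) = 1"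
    using i unfolding invble_def by blast
  define Y where "Y = (1 / \<nu>) *\<^sub>R (1 + b * R * a)"
  have c1: "(of_real \<nu> - b * a) * (b * R * a) = b * ((of_real \<nu> - a * b) * R) * a"
    by (simp add: algebra_simps of_real_def)
  have c2: "(b * R * a) * (of_real \<nu> - b * a) = b * (R * (of_real \<nu> - a * b)) * a"
    by (simp add: algebra_simps of_real_def)
  have d1: "(of_real \<nu> - b * a) * (b * R * a) = b * a" using c1 R(1) by simp
  have d2: "(b * R * a) * (of_real \<nu> - b * a) = b * a" using c2 R(2) by simp
  have "(of_real \<nu> - b * a) * Y = (1 / \<nu>) *\<^sub>R ((of_real \<nu> - b * a) + (of_real \<nu> - b * a) * (b * R * a))"
    unfolding Y_def by (simp add: distrib_left)
  also have "\<dots> = 1" unfolding d1 using n0 by (simp add: of_real_def)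
  finally have 1: "(of_real \<nu> - b * a) * Y = 1" .
  have "Y * (of_real \<nu> - b * a) = (1 / \<nu>) *\<^sub>R ((of_real \<nu> - b * a) + (b * R * a) * (of_real \<nu> - b * a))"
    unfolding Y_def by (simp add: distrib_right)
  also have "\<dots> = 1" unfolding d2 using n0 by (simp add: of_real_def)
  finally have 2: "Y * (of_real \<nu> - b * a) = 1" .
  show ?thesis unfolding invble_def using 1 2 by blast
qed


lemma pos_minus_root:
  fixes p h :: "'a::cstar_unital"
  assumes pp: "pos p" and sah: "sa h" and e: "p * p = h * h" and c: "p * h = h * p"
  shows "pos (p - h)"
  unfolding pos_def
proof (intro conjI allI impI)
  show "sa (p - h)" using pos_sa[OF pp] sah by (rule sa_diff)
  fix \<mu> :: real assume m: "\<mu> < 0"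
  have z1: "(p - h) * (p + h) = 0" using e c by (simp add: algebra_simps)
  have z2: "(p + h) * (p - h) = 0" using e c by (simp add: algebra_simps)
  have "invble (of_real \<mu> * (of_real \<mu> - 2 *\<^sub>R p))"
    by (rule invble_mult[OF invble_of_real pos_invble[OF pos_scale[OF pp]]]) (use m in auto)
  moreover have "(of_real \<mu> - (p - h)) * (of_real \<mu> - (p + h)) = of_real \<mu> * (of_real \<mu> - 2 *\<^sub>R p)"
    using e c by (simp add: of_real_def algebra_simps scaleR_2)
  ultimately have "invble ((of_real \<mu> - (p - h)) * (of_real \<mu> - (p + h)))" by simp
  moreover have "(of_real \<mu> - (p - h)) * (of_real \<mu> - (p + h)) = (of_real \<mu> - (p + h)) * (of_real \<mu> - (p - h))"
    using e c by (simp add: of_real_def algebra_simps)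
  ultimately show "invble (of_real \<mu> - (p - h))" by (rule invble_comm_left[rotated])
qed

lemma sa_nilp:
  fixes a :: "'a::cstar_unital"
  assumes "sa a" "a * a * a = 0" shows "a = 0"
proof -
  have "(a * a) * (a * a) = 0" using assms(2) by (metis mult.assoc mult_zero_left)
  then have "norm (a * a) = 0" using norm_sa_sq[of "a * a"] assms(1)
    by (simp add: sa_mult_comm)
  then have "norm a = 0" using norm_sa_sq[OF assms(1)] by simp
  then show ?thesis by simp
qed

lemma kaplansky:
  fixes x :: "'a::cstar_unital"
  shows "pos (cs_star x * x)"
proof -
  define h where "h = cs_star x * x"
  have sah: "sa h" unfolding h_def sa_def by (simp add: cs_star_mult cs_star_star)
  define T0 where "T0 = (norm h)^2 + 1"
  have T0: "T0 > 0" unfolding T0_def by (simp add: add_nonneg_pos)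
  define k where "k = (1 / T0) *\<^sub>R (h * h)"
  have pk: "pos k" unfolding k_def by (rule pos_scale[OF pos_sq[OF sah]]) (use T0 in simp)
  have nk: "norm k \<le> 1"
  proof -
    have "norm k = (norm h)^2 / T0" unfolding k_def using norm_sa_sq[OF sah] T0 by simp
    also have "\<dots> \<le> 1" unfolding T0_def by (simp add: divide_le_eq_1 add_nonneg_pos)
    finally show ?thesis .
  qed
  define gk where "gk = 1 - k"
  have ngk: "norm gk \<le> 1"
  proof -
    have "gk = of_real (1 - norm k) + (of_real (norm k) - k)" unfolding gk_def by simp
    then have "norm gk \<le> norm (of_real (1 - norm k) :: 'a) + norm (of_real (norm k) - k)"
      by (metis norm_triangle_ineq)
    also have "\<dots> \<le> (1 - norm k) + norm k"
      using pos_norm[OF pk] nk by (simp only: norm_of_real)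
    finally show ?thesis by simp
  qed
  have sagk: "sa gk" unfolding gk_def using pos_sa[OF pk] by (simp add: sa_def star_diff)
  have hgk: "h * gk = gk * h" unfolding gk_def k_def by (simp add: algebra_simps mult.assoc)
  define c where "c = csq gk"
  have cc: "c * c = k" unfolding c_def gk_def using csq_sq[OF ngk[unfolded gk_def]] by simp
  have sac: "sa c" unfolding c_def by (rule csq_sa[OF sagk ngk])
  have pc: "pos c"
    by (rule norm_pos[of _ 1]) (use sac csq_near_one[OF ngk] in \<open>simp_all add: c_def\<close>)
  have hc: "h * c = c * h" unfolding c_def by (rule csq_comm[OF ngk hgk])
  define p where "p = sqrt T0 *\<^sub>R c"
  have pp: "pos p" unfolding p_def by (rule pos_scale[OF pc]) (use T0 in simp)
  have ppe: "p * p = h * h"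
  proof -
    have "p * p = (sqrt T0 * sqrt T0) *\<^sub>R (c * c)" unfolding p_def by simp
    also have "\<dots> = h * h" unfolding cc k_def using T0 by simp
    finally show ?thesis .
  qed
  have ph: "p * h = h * p" unfolding p_def using hc by simp
  have phm: "pos (p - h)" by (rule pos_minus_root[OF pp sah ppe ph])
  have php: "pos (p + h)" using pos_minus_root[OF pp sa_neg[OF sah]] ppe ph by simp
  define hm where "hm = p - h"
  define hpl where "hpl = p + h"
  have sahm: "sa hm" unfolding hm_def using phm by (rule pos_sa)
  have z: "hm * hpl = 0" unfolding hm_def hpl_def using ppe ph by (simp add: algebra_simps)
  have hh: "h = (1/2) *\<^sub>R (hpl - hm)" unfolding hm_def hpl_def by (simp add: scaleR_2[symmetric])
  define y where "y = x * hm"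
  have yy: "cs_star y * y = - ((1/2) *\<^sub>R (hm * hm * hm))"
  proof -
    have "cs_star y * y = hm * h * hm" unfolding y_def h_def
      using sahm unfolding sa_def by (simp add: cs_star_mult mult.assoc)
    also have "\<dots> = (1/2) *\<^sub>R (hm * hpl * hm - hm * hm * hm)" unfolding hh
      by (simp add: algebra_simps)
    also have "\<dots> = - ((1/2) *\<^sub>R (hm * hm * hm))" unfolding z by simp
    finally show ?thesis .
  qed
  have p1: "pos (- (cs_star y * y))" unfolding yy
    by (simp, rule pos_scale[OF pos_cube[OF phm[folded hm_def]]]) simp
  have p2: "pos (- (y * cs_star y))"
    unfolding pos_def
  proof (intro conjI allI impI)
    show "sa (- (y * cs_star y))" unfolding sa_def by (simp add: star_minus cs_star_mult cs_star_star)
    fix \<mu> :: real assume m: "\<mu> < 0"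
    have "invble (of_real \<mu> - (- (cs_star y * y)))" by (rule pos_invble[OF p1 m])
    then have "invble (- (of_real (- \<mu>) - cs_star y * y))" by (simp add: add.commute)
    then have "invble (of_real (- \<mu>) - cs_star y * y)" by (simp only: invble_neg_iff)
    then have "invble (of_real (- \<mu>) - y * cs_star y)" using abba[of "- \<mu>" "cs_star y" y] m by simp
    then have "invble (- (of_real (- \<mu>) - y * cs_star y))" by (rule invble_neg)
    then show "invble (of_real \<mu> - (- (y * cs_star y)))" by (simp add: add.commute)
  qed
  define j where "j = (jj 1 :: 'a)"
  define s where "s = (1/2) *\<^sub>R (y + cs_star y)"
  define u where "u = (1/2) *\<^sub>R (j * (cs_star y - y))"
  have j2: "j * j = -1" unfolding j_def by (simp add: jj_sq)
  have sas: "sa s" unfolding s_def sa_def by (simp add: star_scaleR cs_star_add cs_star_star add.commute)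
  have sau: "sa u" unfolding u_def sa_def j_def
    by (simp add: star_scaleR cs_star_mult star_diff cs_star_star star_jj jj_comm algebra_simps)
  have ju: "j * u = (1/2) *\<^sub>R (y - cs_star y)" unfolding u_def
    by (simp add: mult.assoc[symmetric] j2 algebra_simps)
  have ys: "y = s + j * u" unfolding ju s_def by (simp add: algebra_simps scaleR_2[symmetric])
  have ysy: "cs_star y = s - j * u" unfolding ju s_def by (simp add: algebra_simps scaleR_2[symmetric])
  have juju: "(j * u) * (j * u) = - (u * u)" unfolding j_def
    by (metis j2 j_def jj_assoc1 minus_mult_minus mult.assoc mult_minus1 mult_1_left)
  have sj: "s * (j * u) = j * (s * u)" "(j * u) * s = j * (u * s)" unfolding j_def
    by (simp_all add: jj_assoc1 mult.assoc)
  have cart: "y * cs_star y = 2 *\<^sub>R (s * s + u * u) + (- (cs_star y * y))"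
  proof -
    have "y * cs_star y + cs_star y * y = 2 *\<^sub>R (s * s + u * u)"
    proof -
      have "y * cs_star y + cs_star y * y = (s + j * u) * (s - j * u) + (s - j * u) * (s + j * u)"
        using ys ysy by metis
      also have "\<dots> = 2 *\<^sub>R (s * s) - 2 *\<^sub>R ((j * u) * (j * u))"
        by (simp add: algebra_simps scaleR_2)
      also have "\<dots> = 2 *\<^sub>R (s * s + u * u)" unfolding juju by (simp add: algebra_simps)
      finally show ?thesis .
    qed
    then show ?thesis by (simp add: algebra_simps)
  qed
  have p3: "pos (y * cs_star y)" unfolding cart
    by (rule pos_add[OF pos_scale[OF pos_add[OF pos_sq[OF sas] pos_sq[OF sau]]] p1]) simp
  have "y * cs_star y = 0"
    using pos_antisym[OF p3 p2] .
  then have "norm (cs_star y) = 0"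
    using cstar_identity[of "cs_star y"] by (simp add: cs_star_star)
  then have "y = 0" by (metis norm_eq_zero cs_star_star star_zero)
  then have "hm * hm * hm = 0" using yy by simp
  then have "hm = 0" by (rule sa_nilp[OF sahm])
  then have "h = p" unfolding hm_def by simp
  then show ?thesis using pp unfolding h_def by simp
qed


definition nopen :: "('m::ab_group_add \<Rightarrow> real) \<Rightarrow> 'm set \<Rightarrow> bool" where
  "nopen N U \<longleftrightarrow> (\<forall>x\<in>U. \<exists>e>0. \<forall>y. N (y - x) < e \<longrightarrow> y \<in> U)"

lemma istopology_nopen: "istopology (nopen N)"
  unfolding istopology_def
proof (intro conjI allI impI)
  fix S T assume S: "nopen N S" and T: "nopen N T"
  show "nopen N (S \<inter> T)"
    unfolding nopen_def
  proof
    fix x assume x: "x \<in> S \<inter> T"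
    obtain e1 where e1: "e1 > 0" "\<forall>y. N (y - x) < e1 \<longrightarrow> y \<in> S"
      using S x unfolding nopen_def by auto
    obtain e2 where e2: "e2 > 0" "\<forall>y. N (y - x) < e2 \<longrightarrow> y \<in> T"
      using T x unfolding nopen_def by auto
    show "\<exists>e>0. \<forall>y. N (y - x) < e \<longrightarrow> y \<in> S \<inter> T"
      by (rule exI[of _ "min e1 e2"]) (use e1 e2 in simp)
  qed
next
  fix K assume K: "\<forall>S\<in>K. nopen N S"
  show "nopen N (\<Union>K)"
    unfolding nopen_def
  proof
    fix x assume "x \<in> \<Union>K"
    then obtain S where S: "S \<in> K" "x \<in> S" by auto
    then obtain e where "e > 0" "\<forall>y. N (y - x) < e \<longrightarrow> y \<in> S"
      using K unfolding nopen_def by blast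
    then show "\<exists>e>0. \<forall>y. N (y - x) < e \<longrightarrow> y \<in> \<Union>K" using S by blast
  qed
qed

lemma openin_norm_top:
  "openin (norm_top N) U \<longleftrightarrow> (\<forall>x\<in>U. \<exists>e>0. \<forall>y. N (y - x) < e \<longrightarrow> y \<in> U)"
proof -
  have "norm_top N = topology (nopen N)" unfolding norm_top_def nopen_def by simp
  then have "openin (norm_top N) = nopen N" by (simp add: topology_inverse'[OF istopology_nopen])
  then show ?thesis unfolding nopen_def by simp
qed

lemma topspace_norm_top [simp]: "topspace (norm_top N) = UNIV"
proof -
  have "openin (norm_top N) UNIV" by (simp add: openin_norm_top) (meson zero_less_one)
  then show ?thesis using openin_subset by blast
qed

context
  fixes scM :: "complex \<Rightarrow> 'm::ab_group_add \<Rightarrow> 'm"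
    and act :: "'a::cstar_unital \<Rightarrow> 'm \<Rightarrow> 'm"
    and inn :: "'m \<Rightarrow> 'm \<Rightarrow> 'a"
  assumes HM: "hilbert_left_module scM act inn"
begin

lemma inn_add: "inn (x + y) z = inn x z + inn y z"
  using HM[unfolded hilbert_left_module_def] by (elim conjE) metis

lemma inn_zero: "inn 0 z = 0"
  using inn_add[of 0 0 z] by simp

lemma inn_diff: "inn (x - y) z = inn x z - inn y z"
proof -
  have "inn x z = inn (x - y) z + inn y z" using inn_add[of "x - y" y z] by simp
  then show ?thesis by (simp add: algebra_simps)
qed

lemma inn_star: "cs_star (inn x y) = inn y x"
  using HM[unfolded hilbert_left_module_def] by (elim conjE) metis

lemma inn_scM: "inn (scM c x) z = cs_scale c (inn x z)"
  using HM[unfolded hilbert_left_module_def] by (elim conjE) metis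

lemma inn_eq0: "inn x x = 0 \<Longrightarrow> x = 0"
  using HM[unfolded hilbert_left_module_def] by (elim conjE) metis

lemma scM_add: "scM c (x + y) = scM c x + scM c y"
  using HM[unfolded hilbert_left_module_def] by (elim conjE) metis

lemma scM_diff: "scM c (x - y) = scM c x - scM c y"
proof -
  have "scM c x = scM c (x - y) + scM c y" using scM_add[of c "x - y" y] by simp
  then show ?thesis by (simp add: algebra_simps)
qed

lemma scM_scM: "scM c (scM d x) = scM (c * d) x"
  using HM[unfolded hilbert_left_module_def] by (elim conjE) metis

lemma scM_one: "scM 1 x = x"
  using HM[unfolded hilbert_left_module_def] by (elim conjE) metis

lemma scM_zero: "scM 0 x = 0"
proof -
  have "scM (0 + 0) x = scM 0 x + scM 0 x"
    using HM[unfolded hilbert_left_module_def] by (elim conjE) metis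
  then show ?thesis by simp
qed

lemma inn_self_sa: "cs_star (inn x x) = inn x x"
  using inn_star by blast

lemma hnorm_scM: "hnorm inn (scM c x) = cmod c * hnorm inn x"
proof -
  have "inn x (scM c x) = cs_star (inn (scM c x) x)" using inn_star by metis
  also have "\<dots> = cs_scale (cnj c) (inn x x)"
    by (simp add: inn_scM cs_star_scale inn_self_sa)
  finally have "inn (scM c x) (scM c x) = cs_scale (c * cnj c) (inn x x)"
    by (simp add: inn_scM cs_scale_scale)
  then have "norm (inn (scM c x) (scM c x)) = (cmod c)^2 * norm (inn x x)"
    by (simp add: norm_cs_scale norm_mult power2_eq_square)
  then show ?thesis unfolding hnorm_def by (simp add: real_sqrt_mult)
qed

lemma inn_act: "inn (act b x) y = b * inn x y"
  using HM[unfolded hilbert_left_module_def] by (elim conjE) metis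

lemma inn_right_diff: "inn x (y - z) = inn x y - inn x z"
  by (metis inn_star inn_diff star_diff)

lemma inn_right_act: "inn x (act b y) = inn x y * cs_star b"
  by (metis inn_star inn_act cs_star_mult)

lemma inn_zero_right: "inn x 0 = 0"
  by (metis inn_star inn_zero star_zero)

lemma inn_pos: "pos (inn x x)"
proof -
  have "positive (inn x x)" using HM[unfolded hilbert_left_module_def] by (elim conjE) metis
  then obtain q where "inn x x = cs_star q * q" unfolding positive_def by blast
  then show ?thesis using kaplansky by metis
qed

lemma inn_CS_sq: "(norm (inn z \<eta>))^2 \<le> norm (inn z z) * norm (inn \<eta> \<eta>)"
proof (cases "inn \<eta> \<eta> = 0")
  case True
  then have "\<eta> = 0" by (rule inn_eq0)
  then show ?thesis by (simp add: inn_zero_right)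
next
  case False
  define a where "a = inn z \<eta>"
  define E where "E = inn \<eta> \<eta>"
  define nE where "nE = norm E"
  have nE: "nE > 0" unfolding nE_def E_def using False by simp
  define t where "t = 1 / nE"
  have t0: "t > 0" unfolding t_def using nE by simp
  define b where "b = t *\<^sub>R a"
  define v where "v = act b \<eta>"
  define w where "w = z - v"
  have za: "inn \<eta> z = cs_star a" unfolding a_def by (simp add: inn_star)
  have e1: "inn z v = t *\<^sub>R (a * cs_star a)" unfolding v_def b_def
    by (simp add: inn_right_act star_scaleR a_def)
  have e2: "inn v z = t *\<^sub>R (a * cs_star a)" unfolding v_def b_def by (simp add: inn_act za)
  have e3: "inn v v = (t * t) *\<^sub>R (a * E * cs_star a)" unfolding v_def b_def E_def
    by (simp add: inn_act inn_right_act star_scaleR mult.assoc)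
  have "inn w w = inn z z - inn z v - (inn v z - inn v v)"
    unfolding w_def by (simp add: inn_diff inn_right_diff)
  then have key: "inn z z + (t * t) *\<^sub>R (a * E * cs_star a) = inn w w + (2 * t) *\<^sub>R (a * cs_star a)"
    unfolding e1 e2 e3 by (simp add: algebra_simps scaleR_2[symmetric])
  have paa: "pos ((2 * t) *\<^sub>R (a * cs_star a))"
    by (rule pos_scale) (use kaplansky[of "cs_star a"] t0 in \<open>simp_all add: cs_star_star\<close>)
  have naa: "norm (a * cs_star a) = (norm a)^2"
    using cstar_identity[of "cs_star a"] by (simp add: cs_star_star)
  have "norm ((2 * t) *\<^sub>R (a * cs_star a)) \<le> norm ((2 * t) *\<^sub>R (a * cs_star a) + inn w w)"
    by (rule pos_mono[OF paa inn_pos])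
  also have "\<dots> = norm (inn z z + (t * t) *\<^sub>R (a * E * cs_star a))" unfolding key by (simp add: add.commute)
  also have "\<dots> \<le> norm (inn z z) + (t * t) * norm (a * E * cs_star a)"
    by (metis abs_of_nonneg norm_scaleR norm_triangle_ineq zero_le_mult_iff t0 less_imp_le)
  also have "norm (a * E * cs_star a) \<le> norm a * nE * norm a"
    unfolding nE_def by (metis norm_mult_ineq norm_star mult_right_mono norm_ge_zero order_trans)
  finally have "2 * t * (norm a)^2 \<le> norm (inn z z) + (t * t) * (norm a * nE * norm a)"
    using naa t0 by (simp add: mult_left_mono)
  then have "2 * t * (norm a)^2 \<le> norm (inn z z) + t * (norm a)^2"
    unfolding t_def using nE by (simp add: power2_eq_square field_simps)
  then have "t * (norm a)^2 \<le> norm (inn z z)" by simp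
  then have "(norm a)^2 \<le> norm (inn z z) * nE" unfolding t_def using nE by (simp add: field_simps)
  then show ?thesis unfolding a_def nE_def E_def .
qed

lemma inn_CS: "norm (inn x y) \<le> hnorm inn x * hnorm inn y"
proof -
  have "norm (inn x y) = sqrt ((norm (inn x y))^2)" by simp
  also have "\<dots> \<le> sqrt (norm (inn x x) * norm (inn y y))" by (rule real_sqrt_le_mono[OF inn_CS_sq])
  also have "\<dots> = hnorm inn x * hnorm inn y" unfolding hnorm_def by (simp add: real_sqrt_mult)
  finally show ?thesis .
qed

end


lemma cont_norm_top:
  fixes f :: "'m::ab_group_add \<Rightarrow> 'm"
  assumes "\<And>x y. N (f y - f x) \<le> C * N (y - x)" "C > 0"
  shows "continuous_map (norm_top N) (norm_top N) f"
  unfolding continuous_map_def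
proof (intro conjI allI impI)
  show "f \<in> topspace (norm_top N) \<rightarrow> topspace (norm_top N)" by simp
  fix U assume "openin (norm_top N) U"
  then have U: "\<forall>x\<in>U. \<exists>e>0. \<forall>y. N (y - x) < e \<longrightarrow> y \<in> U" by (simp add: openin_norm_top)
  show "openin (norm_top N) {x \<in> topspace (norm_top N). f x \<in> U}"
    unfolding openin_norm_top
  proof (intro ballI)
    fix x assume "x \<in> {x \<in> topspace (norm_top N). f x \<in> U}"
    then obtain e where e: "e > 0" "\<forall>y. N (y - f x) < e \<longrightarrow> y \<in> U" using U by auto
    show "\<exists>e>0. \<forall>y. N (y - x) < e \<longrightarrow> y \<in> {x \<in> topspace (norm_top N). f x \<in> U}"
    proof (intro exI[of _ "e / C"] conjI allI impI)
      show "e / C > 0" using e assms(2) by simp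
      fix y assume "N (y - x) < e / C"
      then have "C * N (y - x) < e" using assms(2) by (simp add: field_simps)
      moreover have "N (f y - f x) \<le> C * N (y - x)" by (rule assms(1))
      ultimately have "N (f y - f x) < e" by linarith
      then show "y \<in> {x \<in> topspace (norm_top N). f x \<in> U}" using e by simp
    qed
  qed
qed

lemma weak_open_imp_norm_open:
  fixes scM :: "complex \<Rightarrow> 'm::ab_group_add \<Rightarrow> 'm"
    and act :: "'a::cstar_unital \<Rightarrow> 'm \<Rightarrow> 'm"
    and inn :: "'m \<Rightarrow> 'm \<Rightarrow> 'a"
  assumes HM: "hilbert_left_module scM act inn"
    and "openin (A_weak_top inn) U"
  shows "openin (norm_top (hnorm inn)) U"
proof -
  have g: "generate_topology_on {{\<omega>. inn \<omega> \<eta> \<in> V} | \<eta> V. open V} U"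
    using assms(2) unfolding A_weak_top_def by (simp add: openin_topology_generated_by_iff)
  show ?thesis
  proof (rule generate_topology_on_coarsest[OF istopology_openin _ g])
    fix S assume "S \<in> {{\<omega>. inn \<omega> \<eta> \<in> V} | \<eta> V. open V}"
    then obtain \<eta> V where S: "S = {\<omega>. inn \<omega> \<eta> \<in> V}" "open V" by blast
    show "openin (norm_top (hnorm inn)) S"
      unfolding openin_norm_top S(1)
    proof (intro ballI)
      fix x assume "x \<in> {\<omega>. inn \<omega> \<eta> \<in> V}"
      then obtain e where e: "e > 0" "\<forall>y. dist y (inn x \<eta>) < e \<longrightarrow> y \<in> V"
        using S(2) unfolding open_dist by auto
      define d where "d = e / (hnorm inn \<eta> + 1)"
      have hn: "hnorm inn \<eta> \<ge> 0" unfolding hnorm_def by simp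
      have d: "d > 0" unfolding d_def using e hn by simp
      show "\<exists>e>0. \<forall>y. hnorm inn (y - x) < e \<longrightarrow> y \<in> {\<omega>. inn \<omega> \<eta> \<in> V}"
      proof (intro exI[of _ d] conjI allI impI)
        show "d > 0" by fact
        fix y assume y: "hnorm inn (y - x) < d"
        have "dist (inn y \<eta>) (inn x \<eta>) = norm (inn (y - x) \<eta>)"
          by (simp add: dist_norm inn_diff[OF HM])
        also have "\<dots> \<le> hnorm inn (y - x) * hnorm inn \<eta>" by (rule inn_CS[OF HM])
        also have "\<dots> \<le> d * hnorm inn \<eta>" using y hn by (simp add: mult_right_mono)
        also have "\<dots> < e"
        proof -
          have "d * hnorm inn \<eta> < d * (hnorm inn \<eta> + 1)" using d by simp
          also have "\<dots> = e" unfolding d_def using hn by simp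
          finally show ?thesis .
        qed
        finally show "y \<in> {\<omega>. inn \<omega> \<eta> \<in> V}" using e by simp
      qed
    qed
  qed
qed

lemma weak_hausdorff:
  fixes scM :: "complex \<Rightarrow> 'm::ab_group_add \<Rightarrow> 'm"
    and act :: "'a::cstar_unital \<Rightarrow> 'm \<Rightarrow> 'm"
    and inn :: "'m \<Rightarrow> 'm \<Rightarrow> 'a"
  assumes HM: "hilbert_left_module scM act inn"
  shows "Hausdorff_space (A_weak_top inn)"
  unfolding Hausdorff_space_def
proof (intro allI impI)
  fix x y assume xy: "x \<in> topspace (A_weak_top inn) \<and> y \<in> topspace (A_weak_top inn) \<and> x \<noteq> y"
  define \<eta> where "\<eta> = x - y"
  have "inn x \<eta> \<noteq> inn y \<eta>"
  proof
    assume "inn x \<eta> = inn y \<eta>"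
    then have "inn \<eta> \<eta> = 0" unfolding \<eta>_def by (simp add: inn_diff[OF HM])
    then have "x - y = 0" unfolding \<eta>_def by (rule inn_eq0[OF HM])
    then show False using xy by simp
  qed
  from hausdorff[OF this] obtain U V where UV: "open U" "open V" "inn x \<eta> \<in> U" "inn y \<eta> \<in> V" "U \<inter> V = {}"
    by blast
  let ?U = "{\<omega>. inn \<omega> \<eta> \<in> U}" and ?V = "{\<omega>. inn \<omega> \<eta> \<in> V}"
  have "?U \<in> {{\<omega>. inn \<omega> \<eta> \<in> V} | \<eta> V. open V}" using UV(1) by blast
  then have o1: "openin (A_weak_top inn) ?U" unfolding A_weak_top_def by (rule topology_generated_by_Basis)
  have "?V \<in> {{\<omega>. inn \<omega> \<eta> \<in> V} | \<eta> V. open V}" using UV(2) by blast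
  then have o2: "openin (A_weak_top inn) ?V" unfolding A_weak_top_def by (rule topology_generated_by_Basis)
  note o1 o2
  moreover have "disjnt ?U ?V" using UV(5) by (auto simp: disjnt_def)
  ultimately show "\<exists>U V. openin (A_weak_top inn) U \<and> openin (A_weak_top inn) V \<and> x \<in> U \<and> y \<in> V \<and> disjnt U V"
    using UV(3,4) by blast
qed

lemma topspace_weak [simp]: "topspace (A_weak_top (inn :: 'm \<Rightarrow> 'm \<Rightarrow> 'a::cstar_unital)) = UNIV"
proof -
  have "\<exists>\<eta> V. (UNIV::'m set) = {\<omega>. inn \<omega> \<eta> \<in> V} \<and> open V"
  proof -
    have "(UNIV::'m set) = {\<omega>. inn \<omega> undefined \<in> (UNIV::'a set)}" by simp
    then show ?thesis using open_UNIV by blast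
  qed
  then have "UNIV \<in> {{\<omega>. inn \<omega> \<eta> \<in> V} | \<eta> V. open V}" by simp
  then show ?thesis unfolding A_weak_top_def by (auto simp: topology_generated_by_topspace)
qed

lemma ereal_fin: "0 \<le> e \<Longrightarrow> e \<le> ereal r \<Longrightarrow> \<exists>d. e = ereal d \<and> 0 \<le> d \<and> d \<le> r"
  by (cases e) auto

theorem mainTheorem2:
  fixes F :: "real \<Rightarrow> real \<Rightarrow> real \<Rightarrow> real \<Rightarrow> real"
    and G :: "real \<Rightarrow> real \<Rightarrow> real \<Rightarrow> real"
    and H :: "real \<Rightarrow> real \<Rightarrow> real"
    and scM :: "complex \<Rightarrow> 'm::ab_group_add \<Rightarrow> 'm"
    and act :: "'a::cstar_unital \<Rightarrow> 'm \<Rightarrow> 'm"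
    and inn :: "'m \<Rightarrow> 'm \<Rightarrow> 'a"
    and D :: "'m \<Rightarrow> ereal"
    and L :: "'a \<Rightarrow> ereal"
    and r :: real
  assumes "admissible_triple F G H"
    and "mqvb F G H scM act inn D L"
    and "0 \<le> r"
  shows "subtopology (A_weak_top inn) (Dball D r) = subtopology (norm_top (hnorm inn)) (Dball D r)"
proof -
  have HM: "hilbert_left_module scM act inn"
    using assms(2) unfolding mqvb_def by (elim conjE) assumption
  have Dnn: "\<forall>\<omega>. 0 \<le> D \<omega>"
    using assms(2) unfolding mqvb_def by (elim conjE) assumption
  have D0: "0 \<in> ldom D"
    using assms(2) unfolding mqvb_def by (elim conjE) assumption
  have Dsc: "\<forall>x\<in>ldom D. \<forall>c. scM c x \<in> ldom D \<and> D (scM c x) = ereal (cmod c) * D x"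
    using assms(2) unfolding mqvb_def by (elim conjE) assumption
  have Dz: "\<forall>x. D x = 0 \<longrightarrow> x = 0"
    using assms(2) unfolding mqvb_def by (elim conjE) assumption
  have Dcomp: "compactin (norm_top (hnorm inn)) {\<omega>. D \<omega> \<le> 1}"
    using assms(2) unfolding mqvb_def by (elim conjE) assumption
  define K where "K = Dball D r"
  define NT where "NT = norm_top (hnorm inn)"
  define AT where "AT = A_weak_top inn"
  have compK: "compactin NT K"
  proof (cases "r = 0")
    case True
    have "D (scM 0 0) = ereal 0 * D 0" using Dsc D0 by simp
    then have D00: "D 0 = 0" using scM_zero[OF HM] by (simp add: zero_ereal_def[symmetric])
    have "K = {0}"
    proof
      show "K \<subseteq> {0}"
      proof
        fix x assume "x \<in> K"
        then have "D x \<le> 0" unfolding K_def Dball_def True by (simp add: zero_ereal_def)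
        then have "D x = 0" using Dnn by (meson antisym)
        then show "x \<in> {0}" using Dz by simp
      qed
      show "{0} \<subseteq> K" unfolding K_def Dball_def True using D00 by (simp add: zero_ereal_def)
    qed
    then show ?thesis unfolding NT_def by simp
  next
    case False
    then have r0: "r > 0" using assms(3) by simp
    let ?f = "scM (complex_of_real r)"
    have cont: "continuous_map NT NT ?f"
      unfolding NT_def
    proof (rule cont_norm_top[where C=r])
      fix x y
      have "hnorm inn (?f y - ?f x) = cmod (complex_of_real r) * hnorm inn (y - x)"
        by (simp add: scM_diff[OF HM, symmetric] hnorm_scM[OF HM])
      then show "hnorm inn (?f y - ?f x) \<le> r * hnorm inn (y - x)" using r0 by simp
    qed (rule r0)
    have img: "K = ?f ` {\<omega>. D \<omega> \<le> 1}"
    proof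
      show "K \<subseteq> ?f ` {\<omega>. D \<omega> \<le> 1}"
      proof
        fix \<omega> assume "\<omega> \<in> K"
        then have "D \<omega> \<le> ereal r" unfolding K_def Dball_def by simp
        then obtain d where d: "D \<omega> = ereal d" "0 \<le> d" "d \<le> r" using ereal_fin Dnn by blast
        have l: "\<omega> \<in> ldom D" unfolding ldom_def using d by simp
        define x where "x = scM (complex_of_real (1 / r)) \<omega>"
        have "D x = ereal (1 / r) * ereal d" unfolding x_def using Dsc l d r0 by (simp add: norm_divide)
        then have "D x \<le> 1" using d r0 by (simp add: one_ereal_def)
        moreover have "?f x = \<omega>" unfolding x_def using r0
          by (simp add: scM_scM[OF HM] scM_one[OF HM] flip: of_real_mult)
        ultimately show "\<omega> \<in> ?f ` {\<omega>. D \<omega> \<le> 1}" by force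
      qed
      show "?f ` {\<omega>. D \<omega> \<le> 1} \<subseteq> K"
      proof
        fix \<omega> assume "\<omega> \<in> ?f ` {\<omega>. D \<omega> \<le> 1}"
        then obtain x where x: "D x \<le> 1" "\<omega> = ?f x" by blast
        then obtain d where d: "D x = ereal d" "0 \<le> d" "d \<le> 1"
          using ereal_fin[of "D x" 1] Dnn by (auto simp: one_ereal_def)
        have l: "x \<in> ldom D" unfolding ldom_def using d by simp
        have "D \<omega> = ereal r * ereal d" unfolding x(2) using Dsc l r0 d by simp
        also have "\<dots> \<le> ereal r" using d r0 by (simp add: mult_left_le)
        finally show "\<omega> \<in> K" unfolding K_def Dball_def by simp
      qed
    qed
    show ?thesis unfolding img by (rule image_compactin[OF Dcomp[folded NT_def] cont])
  qed
  have c0: "continuous_map NT AT id"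
    unfolding continuous_map_def NT_def AT_def
    using weak_open_imp_norm_open[OF HM] by simp
  have c1: "continuous_map (subtopology NT K) (subtopology AT K) id"
    unfolding continuous_map_in_subtopology
    using continuous_map_from_subtopology[OF c0] by (auto simp: NT_def)
  have cs: "compact_space (subtopology NT K)" by (rule compact_space_subtopology[OF compK])
  have hs: "Hausdorff_space (subtopology AT K)"
    unfolding AT_def by (rule Hausdorff_space_subtopology[OF weak_hausdorff[OF HM]])
  have "homeomorphic_map (subtopology NT K) (subtopology AT K) id"
    by (rule continuous_imp_homeomorphic_map[OF c1 cs hs]) (auto simp: NT_def AT_def)
  then show ?thesis unfolding homeomorphic_map_id K_def NT_def AT_def .
qed


end
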